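(* Let $q=p-1$, $\lambda>\lambda_1(\Omega_0)$, and let $v_0\in W^{s,p}_0(\Omega_0)\cap L^\infty(\Omega_0)$ be nonnegative, nontrivial, with $E_{\Omega_0}(v_0)<0$. Let $v$ be a weak solution of $(\mathbb P_0)$ with $v(0)=v_0$ satisfying the energy inequality $\int_0^t\!\int_{\Omega_0}|\partial_tv|^2+E_{\Omega_0}(v(t))\le E_{\Omega_0}(v_0)$. If $p\le2$, then $\|v(t)\|_{L^2(\Omega_0)}\to\infty$ as $t\to\infty$. If $p>2$, then the maximal existence time of $v$ is finite.
   Context: Setting: $\Omega_0\subset\mathbb R^d$, $d\ge2$, a bounded $C^{1,1}$ open set; $s\in(0,1)$, $p\in(1,\infty)$; $\langle(-\Delta)^s_pu,\phi\rangle=\int_{\mathbb R^{2d}}\frac{|u(x)-u(y)|^{p-2}(u(x)-u(y))(\phi(x)-\phi(y))}{|x-y|^{d+sp}}$; $W^{s,p}_0(\Omega_0)$ = functions in $L^p(\mathbb R^d)$ vanishing off $\Omega_0$ with finite norm $\|u\|^p_{W^{s,p}_0(\Omega_0)}=\int_{\mathbb R^{2d}}\frac{|u(x)-u(y)|^p}{|x-y|^{d+sp}}$; $\lambda_1(\Omega_0)=\inf_{v\ne0}\|v\|^p_{W^{s,p}_0(\Omega_0)}/\|v\|^p_{L^p(\Omega_0)}$. Problem $(\mathbb P_0)$: $\partial_tv+(-\Delta)^s_pv=\lambda v^q$ in $(0,T)\times\Omega_0$, $v=0$ off $\Omega_0$, $v\ge0$, $v(0)=v_0$, with weak solutions defined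 as nonnegative $v\in L^\infty\cap L^\infty(0,T;W^{s,p}_0(\Omega_0))$, $\partial_tv\in L^2$, satisfying the equation tested against $\phi\in L^1(0,T;W^{s,p}_0(\Omega_0))\cap L^2$. $E_{\Omega_0}(v)=\frac1p\|v\|^p_{W^{s,p}_0(\Omega_0)}-\frac{\lambda}{q+1}\|v\|^{q+1}_{L^{q+1}(\Omega_0)}$. *)

theory Defs
  imports "HOL-Analysis.Analysis"
begin

text \<open>Bounded C^{1,1} open set: open, bounded, and near every boundary point it is
  locally the strict epigraph of a C^{1,1} function over a hyperplane (direction e).\<close>
definition C11_domain :: "'a::euclidean_space set \<Rightarrow> bool" where
  "C11_domain \<Omega> \<longleftrightarrow> open \<Omega> \<and> bounded \<Omega> \<and>
    (\<forall>x0\<in>frontier \<Omega>. \<exists>(e::'a) (r::real) (g::'a \<Rightarrow> real) (G::'a \<Rightarrow> 'a) (L::real).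
        norm e = 1 \<and> r > 0 \<and>
        (\<forall>z. (g has_derivative (\<lambda>h. G z \<bullet> h)) (at z)) \<and>
        (\<forall>z z'. norm (G z - G z') \<le> L * norm (z - z')) \<and>
        \<Omega> \<inter> ball x0 r = {x \<in> ball x0 r. g (x - (x \<bullet> e) *\<^sub>R e) < x \<bullet> e})"

definition gagliardo :: "real \<Rightarrow> real \<Rightarrow> ('a::euclidean_space \<Rightarrow> real) \<Rightarrow> ennreal" where
  "gagliardo s p u = (\<integral>\<^sup>+ z. ennreal (\<bar>u (fst z) - u (snd z)\<bar> powr p /
        norm (fst z - snd z) powr (real DIM('a) + s * p)) \<partial>(lborel \<Otimes>\<^sub>M lborel))"

definition W0 :: "real \<Rightarrow> real \<Rightarrow> 'a::euclidean_space set \<Rightarrow> ('a \<Rightarrow> real) set" where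
  "W0 s p \<Omega> = {u. u \<in> borel_measurable lborel \<and> (AE x in lborel. x \<notin> \<Omega> \<longrightarrow> u x = 0) \<and>
      integrable lborel (\<lambda>x. \<bar>u x\<bar> powr p) \<and> gagliardo s p u < \<infinity>}"

definition Wnorm_pow :: "real \<Rightarrow> real \<Rightarrow> ('a::euclidean_space \<Rightarrow> real) \<Rightarrow> real" where
  "Wnorm_pow s p u = enn2real (gagliardo s p u)"

definition Lnorm_pow :: "real \<Rightarrow> 'a::euclidean_space set \<Rightarrow> ('a \<Rightarrow> real) \<Rightarrow> real" where
  "Lnorm_pow r \<Omega> u = (\<integral>x\<in>\<Omega>. \<bar>u x\<bar> powr r \<partial>lborel)"

definition lambda1 :: "real \<Rightarrow> real \<Rightarrow> 'a::euclidean_space set \<Rightarrow> real" where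
  "lambda1 s p \<Omega> = Inf {Wnorm_pow s p v / Lnorm_pow p \<Omega> v | v. v \<in> W0 s p \<Omega> \<and> Lnorm_pow p \<Omega> v \<noteq> 0}"

definition energy :: "real \<Rightarrow> real \<Rightarrow> real \<Rightarrow> real \<Rightarrow> 'a::euclidean_space set \<Rightarrow> ('a \<Rightarrow> real) \<Rightarrow> real" where
  "energy s p lam q \<Omega> v = Wnorm_pow s p v / p - lam / (q + 1) * Lnorm_pow (q + 1) \<Omega> v"

definition pLap_pair :: "real \<Rightarrow> real \<Rightarrow> ('a::euclidean_space \<Rightarrow> real) \<Rightarrow> ('a \<Rightarrow> real) \<Rightarrow> real" where
  "pLap_pair s p u \<phi> = (\<integral> z. \<bar>u (fst z) - u (snd z)\<bar> powr (p - 2) * (u (fst z) - u (snd z)) *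
        (\<phi> (fst z) - \<phi> (snd z)) / norm (fst z - snd z) powr (real DIM('a) + s * p)
        \<partial>(lborel \<Otimes>\<^sub>M lborel))"

definition test_fun :: "real \<Rightarrow> real \<Rightarrow> 'a::euclidean_space set \<Rightarrow> real \<Rightarrow> (real \<Rightarrow> 'a \<Rightarrow> real) \<Rightarrow> bool" where
  "test_fun s p \<Omega> T \<phi> \<longleftrightarrow>
     (\<lambda>z. \<phi> (fst z) (snd z)) \<in> borel_measurable (lborel \<Otimes>\<^sub>M lborel) \<and>
     (AE t in lborel. t \<in> {0<..<T} \<longrightarrow> \<phi> t \<in> W0 s p \<Omega>) \<and>
     (\<integral>\<^sup>+ t\<in>{0<..<T}. ennreal (Wnorm_pow s p (\<phi> t) powr (1 / p)) \<partial>lborel) < \<infinity> \<and>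
     (\<integral>\<^sup>+ z\<in>{0<..<T} \<times> \<Omega>. ennreal ((\<phi> (fst z) (snd z))\<^sup>2) \<partial>(lborel \<Otimes>\<^sub>M lborel)) < \<infinity>"

text \<open>v is a weak solution of (P_0) on (0,T) with initial datum v0, w being its time
  derivative \<partial>_t v \<in> L^2((0,T)\<times>\<Omega>) (v(t) = v0 + \<integral>_0^t w, which encodes both the weak
  time derivative and v(0) = v0).\<close>
definition weak_sol ::
  "real \<Rightarrow> real \<Rightarrow> real \<Rightarrow> real \<Rightarrow> 'a::euclidean_space set \<Rightarrow> real \<Rightarrow>
     ('a \<Rightarrow> real) \<Rightarrow> (real \<Rightarrow> 'a \<Rightarrow> real) \<Rightarrow> (real \<Rightarrow> 'a \<Rightarrow> real) \<Rightarrow> bool" where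
  "weak_sol s p lam q \<Omega> T v0 v w \<longleftrightarrow>
     (\<lambda>z. v (fst z) (snd z)) \<in> borel_measurable (lborel \<Otimes>\<^sub>M lborel) \<and>
     (\<lambda>z. w (fst z) (snd z)) \<in> borel_measurable (lborel \<Otimes>\<^sub>M lborel) \<and>
     (\<forall>t\<in>{0..<T}. AE x in lborel. v t x \<ge> 0) \<and>
     (\<exists>M. AE t in lborel. t \<in> {0<..<T} \<longrightarrow> (AE x in lborel. \<bar>v t x\<bar> \<le> M)) \<and>
     (AE t in lborel. t \<in> {0<..<T} \<longrightarrow> v t \<in> W0 s p \<Omega>) \<and>
     (\<exists>K. AE t in lborel. t \<in> {0<..<T} \<longrightarrow> Wnorm_pow s p (v t) \<le> K) \<and>
     (\<integral>\<^sup>+ z\<in>{0<..<T} \<times> \<Omega>. ennreal ((w (fst z) (snd z))\<^sup>2) \<partial>(lborel \<Otimes>\<^sub>M lborel)) < \<infinity> \<and>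
     (\<forall>t\<in>{0..<T}. AE x in lborel. x \<in> \<Omega> \<longrightarrow>
         v t x = v0 x + (LBINT \<tau>=0..t. w \<tau> x)) \<and>
     (\<forall>\<phi>. test_fun s p \<Omega> T \<phi> \<longrightarrow>
        (\<integral>z\<in>{0<..<T} \<times> \<Omega>. w (fst z) (snd z) * \<phi> (fst z) (snd z) \<partial>(lborel \<Otimes>\<^sub>M lborel))
        + (LBINT t=0..T. pLap_pair s p (v t) (\<phi> t))
        = lam * (\<integral>z\<in>{0<..<T} \<times> \<Omega>. v (fst z) (snd z) powr q * \<phi> (fst z) (snd z)
                    \<partial>(lborel \<Otimes>\<^sub>M lborel)))"

definition energy_ineq ::
  "real \<Rightarrow> real \<Rightarrow> real \<Rightarrow> real \<Rightarrow> 'a::euclidean_space set \<Rightarrow> real \<Rightarrow>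
     ('a \<Rightarrow> real) \<Rightarrow> (real \<Rightarrow> 'a \<Rightarrow> real) \<Rightarrow> (real \<Rightarrow> 'a \<Rightarrow> real) \<Rightarrow> bool" where
  "energy_ineq s p lam q \<Omega> T v0 v w \<longleftrightarrow>
     (\<forall>t\<in>{0..<T}.
        (\<integral>z\<in>{0<..<t} \<times> \<Omega>. (w (fst z) (snd z))\<^sup>2 \<partial>(lborel \<Otimes>\<^sub>M lborel))
        + energy s p lam q \<Omega> (v t) \<le> energy s p lam q \<Omega> v0)"

definition global_sol ::
  "real \<Rightarrow> real \<Rightarrow> real \<Rightarrow> real \<Rightarrow> 'a::euclidean_space set \<Rightarrow>
     ('a \<Rightarrow> real) \<Rightarrow> (real \<Rightarrow> 'a \<Rightarrow> real) \<Rightarrow> bool" where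
  "global_sol s p lam q \<Omega> v0 v \<longleftrightarrow>
     (\<exists>w. \<forall>T>0. weak_sol s p lam q \<Omega> T v0 v w \<and> energy_ineq s p lam q \<Omega> T v0 v w)"

end

theory Submission imports Defs begin



lemma pLap_zero: "pLap_pair s p u (\<lambda>x. 0) = 0"
  by (simp add: pLap_pair_def)

lemma gag_zero: "gagliardo s p (\<lambda>x::'a::euclidean_space. 0) = 0"
  by (simp add: gagliardo_def)

lemma Wnorm_zero: "Wnorm_pow s p (\<lambda>x::'a::euclidean_space. 0) = 0"
  by (simp add: Wnorm_pow_def gag_zero)

lemma W0_zero: "(\<lambda>x::'a::euclidean_space. 0) \<in> W0 s p \<Omega>"
  by (simp add: W0_def gag_zero)

lemma abs_powr_self: "\<bar>a::real\<bar> powr (p - 2) * a * a = \<bar>a\<bar> powr p"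
proof (cases "a = 0")
  case False
  have e0: "\<bar>a\<bar> powr (p - 2) * \<bar>a\<bar> powr 2 = \<bar>a\<bar> powr (p - 2 + 2)"
    by (rule powr_add[symmetric])
  have e1: "\<bar>a\<bar> powr (p - 2) * \<bar>a\<bar> powr 2 = \<bar>a\<bar> powr p"
    using e0 by (metis diff_add_cancel)
  have e2: "\<bar>a\<bar> powr 2 = a * a" using False by (simp add: power2_eq_square)
  show ?thesis by (metis e1 e2 mult.assoc)
qed simp

lemma pLap_self:
  fixes u :: "'a::euclidean_space \<Rightarrow> real"
  assumes [measurable]: "u \<in> borel_measurable lborel"
  shows "pLap_pair s p u u = Wnorm_pow s p u"
proof -
  have "pLap_pair s p u u = (\<integral>z. \<bar>u (fst z) - u (snd z)\<bar> powr p / norm (fst z - snd z) powr (real DIM('a) + s * p)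
        \<partial>(lborel \<Otimes>\<^sub>M lborel))"
    unfolding pLap_pair_def by (simp add: abs_powr_self)
  also have "\<dots> = Wnorm_pow s p u"
    unfolding Wnorm_pow_def gagliardo_def
    by (rule integral_eq_nn_integral) auto
  finally show ?thesis .
qed



lemma triangle:
  fixes f :: "real \<Rightarrow> real" and t :: real
  assumes fi: "integrable lborel (\<lambda>\<tau>. indicator {0<..<t} \<tau> * f \<tau>)"
    and fm[measurable]: "f \<in> borel_measurable lborel"
  shows "integrable lborel (\<lambda>\<tau>. indicator {0<..<t} \<tau> * (f \<tau> * (\<integral>\<sigma>. indicator {0<..<\<tau>} \<sigma> * f \<sigma> \<partial>lborel)))"
    and "(\<integral>\<tau>. indicator {0<..<t} \<tau> * (f \<tau> * (\<integral>\<sigma>. indicator {0<..<\<tau>} \<sigma> * f \<sigma> \<partial>lborel)) \<partial>lborel)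
          = (\<integral>\<sigma>. indicator {0<..<t} \<sigma> * f \<sigma> \<partial>lborel)^2 / 2"
proof -
  define A where "A = {0<..<t}"
  define fA where "fA \<tau> = indicator A \<tau> * f \<tau>" for \<tau>
  have fAm[measurable]: "fA \<in> borel_measurable lborel" unfolding fA_def A_def by measurable
  have fAi: "integrable lborel fA" using fi unfolding fA_def A_def .
  define F where "F z = fA (fst z) * fA (snd z)" for z :: "real \<times> real"
  have Fm[measurable]: "F \<in> borel_measurable (lborel \<Otimes>\<^sub>M lborel)" unfolding F_def by measurable
  have Fint: "integrable (lborel \<Otimes>\<^sub>M lborel) F"
  proof (rule lborel_pair.Fubini_integrable[OF Fm])
    have "(\<lambda>x. \<integral>y. norm (F (x, y)) \<partial>lborel) = (\<lambda>x. \<bar>fA x\<bar> * (\<integral>y. \<bar>fA y\<bar> \<partial>lborel))"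
      by (simp add: F_def abs_mult)
    then show "integrable lborel (\<lambda>x. \<integral>y. norm (F (x, y)) \<partial>lborel)"
      using fAi by simp
    show "AE x in lborel. integrable lborel (\<lambda>y. F (x, y))"
      using fAi by (simp add: F_def)
  qed
  define Lo where "Lo z = (if snd z < fst z then F z else 0)" for z :: "real \<times> real"
  define Up where "Up z = (if fst z < snd z then F z else 0)" for z :: "real \<times> real"
  have Lom[measurable]: "Lo \<in> borel_measurable (lborel \<Otimes>\<^sub>M lborel)" unfolding Lo_def by measurable
  have Upm[measurable]: "Up \<in> borel_measurable (lborel \<Otimes>\<^sub>M lborel)" unfolding Up_def by measurable
  have Loint: "integrable (lborel \<Otimes>\<^sub>M lborel) Lo"
    by (rule Bochner_Integration.integrable_bound[OF Fint Lom]) (auto simp: Lo_def)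
  have Upint: "integrable (lborel \<Otimes>\<^sub>M lborel) Up"
    by (rule Bochner_Integration.integrable_bound[OF Fint Upm]) (auto simp: Up_def)
  have diag: "AE z in lborel \<Otimes>\<^sub>M lborel. F z = Lo z + Up z"
  proof (rule lborel_pair.AE_pair_measure)
    show "{x \<in> space (lborel \<Otimes>\<^sub>M lborel). F x = Lo x + Up x} \<in> sets (lborel \<Otimes>\<^sub>M lborel)"
      by measurable
    show "AE x in lborel. AE y in lborel. F (x, y) = Lo (x, y) + Up (x, y)"
    proof (rule AE_I2)
      fix x :: real
      show "AE y in lborel. F (x, y) = Lo (x, y) + Up (x, y)"
        by (rule eventually_mono[OF AE_lborel_singleton[of x]]) (auto simp: Lo_def Up_def)
    qed
  qed
  have intF: "integral\<^sup>L (lborel \<Otimes>\<^sub>M lborel) F = (\<integral>\<sigma>. fA \<sigma> \<partial>lborel)^2"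
  proof -
    have "integral\<^sup>L (lborel \<Otimes>\<^sub>M lborel) F = (\<integral>x. (\<integral>y. F (x, y) \<partial>lborel) \<partial>lborel)"
      using lborel_pair.integral_fst'[OF Fint] by simp
    also have "\<dots> = (\<integral>x. fA x * (\<integral>y. fA y \<partial>lborel) \<partial>lborel)"
      by (simp add: F_def)
    also have "\<dots> = (\<integral>\<sigma>. fA \<sigma> \<partial>lborel)^2"
      by (simp add: power2_eq_square)
    finally show ?thesis .
  qed
  have swap: "integral\<^sup>L (lborel \<Otimes>\<^sub>M lborel) Up = integral\<^sup>L (lborel \<Otimes>\<^sub>M lborel) Lo"
  proof -
    have "integral\<^sup>L (lborel \<Otimes>\<^sub>M lborel) Lo = (\<integral>(x,y). Lo (y,x) \<partial>(lborel \<Otimes>\<^sub>M lborel))"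
      using lborel_pair.integral_product_swap[OF Lom] by simp
    also have "\<dots> = integral\<^sup>L (lborel \<Otimes>\<^sub>M lborel) Up"
      by (rule Bochner_Integration.integral_cong) (auto simp: Lo_def Up_def F_def mult.commute)
    finally show ?thesis by simp
  qed
  have sum: "integral\<^sup>L (lborel \<Otimes>\<^sub>M lborel) F = integral\<^sup>L (lborel \<Otimes>\<^sub>M lborel) Lo + integral\<^sup>L (lborel \<Otimes>\<^sub>M lborel) Up"
  proof -
    have "integral\<^sup>L (lborel \<Otimes>\<^sub>M lborel) F = integral\<^sup>L (lborel \<Otimes>\<^sub>M lborel) (\<lambda>z. Lo z + Up z)"
      by (rule integral_cong_AE) (use diag in auto)
    also have "\<dots> = integral\<^sup>L (lborel \<Otimes>\<^sub>M lborel) Lo + integral\<^sup>L (lborel \<Otimes>\<^sub>M lborel) Up"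
      by (rule Bochner_Integration.integral_add[OF Loint Upint])
    finally show ?thesis .
  qed
  define I where "I \<tau> = (\<integral>\<sigma>. indicator {0<..<\<tau>} \<sigma> * f \<sigma> \<partial>lborel)" for \<tau>
  have inner: "(\<integral>y. Lo (x, y) \<partial>lborel) = indicator {0<..<t} x * (f x * I x)" for x
  proof (cases "x \<in> A")
    case True
    have "(\<lambda>y. Lo (x, y)) = (\<lambda>y. fA x * (indicator {0<..<x} y * f y))"
      using True by (auto simp: Lo_def F_def fA_def A_def indicator_def fun_eq_iff)
    then show ?thesis using True by (simp add: I_def fA_def A_def)
  next
    case False
    then have "(\<lambda>y. Lo (x, y)) = (\<lambda>y. 0)" by (auto simp: Lo_def F_def fA_def fun_eq_iff)
    then show ?thesis using False by (simp add: A_def)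
  qed
  have eqLo: "integral\<^sup>L (lborel \<Otimes>\<^sub>M lborel) Lo = (\<integral>\<tau>. indicator {0<..<t} \<tau> * (f \<tau> * I \<tau>) \<partial>lborel)"
    using lborel_pair.integral_fst'[OF Loint] by (simp add: inner)
  show "integrable lborel (\<lambda>\<tau>. indicator {0<..<t} \<tau> * (f \<tau> * (\<integral>\<sigma>. indicator {0<..<\<tau>} \<sigma> * f \<sigma> \<partial>lborel)))"
    using lborel_pair.integrable_fst'[OF Loint] by (simp add: inner I_def)
  show "(\<integral>\<tau>. indicator {0<..<t} \<tau> * (f \<tau> * (\<integral>\<sigma>. indicator {0<..<\<tau>} \<sigma> * f \<sigma> \<partial>lborel)) \<partial>lborel)
          = (\<integral>\<sigma>. indicator {0<..<t} \<sigma> * f \<sigma> \<partial>lborel)^2 / 2"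
    using intF sum swap eqLo by (simp add: I_def fA_def A_def)
qed

lemma HK_conv:
  fixes f :: "real \<Rightarrow> real"
  assumes "integrable lborel (\<lambda>\<tau>. indicator {0<..<t} \<tau> * f \<tau>)"
  shows "f integrable_on {0..t}" "(\<integral>\<tau>. indicator {0<..<t} \<tau> * f \<tau> \<partial>lborel) = integral {0..t} f"
proof -
  have si: "set_integrable lborel {0<..<t} f" using assms by (simp add: set_integrable_def)
  show "f integrable_on {0..t}" using set_borel_integral_eq_integral(1)[OF si]
    by (simp add: integrable_on_open_interval_real)
  show "(\<integral>\<tau>. indicator {0<..<t} \<tau> * f \<tau> \<partial>lborel) = integral {0..t} f"
    using set_borel_integral_eq_integral(2)[OF si]
    by (simp add: set_lebesgue_integral_def integral_open_interval_real)
qed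



lemma HKcomb: "a \<le> c \<Longrightarrow> c \<le> b \<Longrightarrow> (f::real\<Rightarrow>real) integrable_on {a..b} \<Longrightarrow>
   integral {a..b} f = integral {a..c} f + integral {c..b} f"
  using Henstock_Kurzweil_Integration.integral_combine by metis

lemma blowup_abstract:
  fixes y g H :: "real \<Rightarrow> real" and y0 c p :: real
  assumes p: "p > 2" and c: "c > 0" and y0: "y0 \<ge> 0"
  and gint: "\<And>t. t \<ge> 0 \<Longrightarrow> g integrable_on {0..t}"
  and yeq: "\<And>t. t \<ge> 0 \<Longrightarrow> y t = y0 + 2 * integral {0..t} g"
  and gH: "\<And>t. t \<ge> 0 \<Longrightarrow> g t \<ge> p * H t + c"
  and H0: "\<And>t. t \<ge> 0 \<Longrightarrow> H t \<ge> 0"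
  and CS: "\<And>t e. t > 0 \<Longrightarrow> e > 0 \<Longrightarrow> (y t - y0)/2 \<le> e * H t + integral {0..t} y / (4*e)"
  shows False
proof -
  have gc: "g t \<ge> c" if "t \<ge> 0" for t using gH[OF that] H0[OF that] p
    by (smt (verit) mult_nonneg_nonneg)
  have ycont: "continuous_on {0..b} y" if "b \<ge> 0" for b
  proof -
    have "continuous_on {0..b} (\<lambda>t. y0 + 2 * integral {0..t} g)"
      by (intro continuous_intros indefinite_integral_continuous_1 gint that)
    then show ?thesis by (rule continuous_on_eq) (auto simp: yeq)
  qed
  have yinc: "y s + 2*c*(t - s) \<le> y t" if "0 \<le> s" "s \<le> t" for s t
  proof -
    have gi: "g integrable_on {s..t}" using integrable_subinterval_real[OF gint[of t]] that by auto
    have "integral {0..t} g = integral {0..s} g + integral {s..t} g"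
      using HKcomb[OF that(1,2) gint[of t]] that by auto
    moreover have "integral {s..t} (\<lambda>_. c) \<le> integral {s..t} g"
      by (rule integral_le[OF _ gi]) (use gc that in auto)
    ultimately show ?thesis using yeq[of s] yeq[of t] that by (simp add: mult.commute)
  qed
  define M where "M t = integral {0..t} y" for t
  have yint: "y integrable_on {a..b}" if "0 \<le> a" for a b
  proof (cases "a \<le> b")
    case True
    then show ?thesis using integrable_continuous_real[OF ycont[of b]] that
      integrable_subinterval_real[of y 0 b a b] by auto
  next
    case False then show ?thesis by (simp add: integrable_on_empty)
  qed
  have Mder: "(M has_real_derivative y t) (at t)" if "t > 0" for t
  proof -
    have "(M has_real_derivative y t) (at t within {0..t+1})"
      unfolding M_def by (rule integral_has_real_derivative[OF ycont]) (use that in auto)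
    moreover have "t \<in> interior {0..t+1}" using that by auto
    ultimately show ?thesis using at_within_interior by metis
  qed
  have y0le: "y0 + 2*c*t \<le> y t" if "t \<ge> 0" for t
    using yinc[of 0 t] yeq[of 0] that by auto
  have ynn: "y t \<ge> 0" if "t \<ge> 0" for t using y0le[OF that] y0 c that
    by (smt (verit) mult_nonneg_nonneg)
  have ylin: "c * t \<le> y x" if "t \<le> 2*x" "x \<ge> 0" for t x
  proof -
    have "c * t \<le> c * (2*x)" using that c by (intro mult_left_mono) auto
    then show ?thesis using y0le[OF that(2)] y0 by linarith
  qed
  have Mpos: "M t > 0" if "t > 0" for t
  proof -
    have "M t = integral {0..t/2} y + integral {t/2..t} y"
      unfolding M_def by (rule HKcomb) (use that yint in auto)
    moreover have "integral {0..t/2} y \<ge> 0"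
      by (rule integral_nonneg[OF yint]) (use ynn in auto)
    moreover have "integral {t/2..t} (\<lambda>_. c*t) \<le> integral {t/2..t} y"
      by (rule integral_le[OF _ yint]) (use ylin that in auto)
    moreover have "integral {t/2..t} (\<lambda>_. c*t) > 0" using that c by auto
    ultimately show ?thesis by linarith
  qed
  define z where "z t = y t - y0" for t
  have zpos: "z t \<ge> 2*c*t" if "t \<ge> 0" for t using y0le[OF that] by (simp add: z_def)
  have zposs: "z t > 0" if "t > 0" for t using zpos[of t] that c by (smt (verit) mult_pos_pos)
  have Hlow: "H t \<ge> (z t)^2 / (4 * M t)" if "t > 0" for t
  proof -
    have zp: "z t > 0" using zpos[of t] that c by (smt (verit) mult_pos_pos)
    have Mp: "M t > 0" using Mpos[OF that] .
    have "z t / 2 \<le> (M t / z t) * H t + M t / (4 * (M t / z t))"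
      using CS[OF that, of "M t / z t"] zp Mp by (simp add: z_def M_def)
    also have "M t / (4 * (M t / z t)) = z t / 4" using zp Mp by (simp add: field_simps)
    finally have "z t / 4 \<le> (M t / z t) * H t" by linarith
    then have "z t * z t \<le> 4 * M t * H t" using zp Mp by (simp add: field_simps)
    then show ?thesis using Mp by (simp add: field_simps power2_eq_square)
  qed
  define F where "F t = (z t)^2 / M t" for t
  have gF: "g t \<ge> (p/4) * F t" if "t > 0" for t
  proof -
    have "p * H t \<ge> p * ((z t)^2 / (4 * M t))" using Hlow[OF that] p by (intro mult_left_mono) auto
    then show ?thesis using gH[of t] that c by (simp add: F_def field_simps)
  qed
  have Fcont: "continuous_on {a..b} F" if "a > 0" for a b
  proof -
    have "continuous_on {a..b} y"
      by (rule continuous_on_subset[OF ycont[of "max a b"]]) (use that in auto)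
    moreover have "continuous_on {a..b} M"
    proof -
      have "\<forall>t\<in>{a..b}. isCont M t" using Mder that
        by (metis DERIV_isCont atLeastAtMost_iff less_le_trans)
      then show ?thesis by (simp add: continuous_at_imp_continuous_on)
    qed
    ultimately show ?thesis unfolding F_def z_def using Mpos that
      by (intro continuous_intros) (auto, metis less_le_trans less_irrefl)
  qed
  define \<beta> where "\<beta> = (p + 2) / 4"
  have b1: "\<beta> > 1" using p by (simp add: \<beta>_def)
  define t0 where "t0 = max 1 ((p + 2) * y0 / ((p - 2) * (2 * c)))"
  have t0p: "t0 > 0" by (simp add: t0_def)
  have zbig: "(p - 2) * z t \<ge> (p + 2) * y0" if "t \<ge> t0" for t
  proof -
    have "t \<ge> (p + 2) * y0 / ((p - 2) * (2 * c))" using that by (simp add: t0_def)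
    then have "(p + 2) * y0 \<le> t * ((p - 2) * (2 * c))" using p c by (simp add: field_simps)
    also have "\<dots> \<le> (p - 2) * z t"
    proof -
      have e: "t * ((p - 2) * (2 * c)) = (p-2)*(2*c*t)" by (simp add: algebra_simps)
      have "(p-2)*(2*c*t) \<le> (p-2)*z t" using zpos[of t] that t0p p by (intro mult_left_mono) auto
      then show ?thesis using e by linarith
    qed
    finally show ?thesis .
  qed
  define t1 where "t1 = t0 / 2"
  have t1p: "t1 > 0" "t1 < t0" using t0p by (auto simp: t1_def)
  define R where "R t = z t0 + (p/2) * (integral {t1..t} F - integral {t1..t0} F)" for t
  have Fint: "F integrable_on {a..b}" if "a > 0" for a b
    using integrable_continuous_real[OF Fcont[OF that]] .
  have Fnn: "F t \<ge> 0" if "t > 0" for t using Mpos[OF that] by (simp add: F_def)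
  have Rder: "(R has_real_derivative (p/2) * F t) (at t)" if "t > t1" for t
  proof -
    have "((\<lambda>t. integral {t1..t} F) has_real_derivative F t) (at t within {t1..t+1})"
      by (rule integral_has_real_derivative[OF Fcont]) (use that t1p in auto)
    moreover have "t \<in> interior {t1..t+1}" using that by auto
    ultimately have "((\<lambda>t. integral {t1..t} F) has_real_derivative F t) (at t)"
      using at_within_interior by metis
    then show ?thesis unfolding R_def
      by (auto intro!: derivative_eq_intros)
  qed
  have Rform: "R t = z t0 + (p/2) * integral {t0..t} F" if "t \<ge> t0" for t
    using HKcomb[of t1 t0 t F] t1p that Fint[of t1 t] by (simp add: R_def)
  have zR: "z t \<ge> R t" if "t \<ge> t0" for t
  proof -
    have gi: "g integrable_on {t0..t}" using integrable_subinterval_real[OF gint[of t]] that t0p by auto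
    have "integral {0..t} g = integral {0..t0} g + integral {t0..t} g"
      using HKcomb[OF _ that gint[of t]] that t0p by auto
    moreover have "integral {t0..t} (\<lambda>s. (p/4) * F s) \<le> integral {t0..t} g"
    proof -
      have Fi: "(\<lambda>s. (p/4) * F s) integrable_on {t0..t}"
        using integrable_on_cmult_left[OF Fint[of t0 t], of "p/4"] t0p by simp
      show ?thesis by (rule integral_le[OF Fi gi]) (use gF that t0p in auto)
    qed
    moreover have "integral {t0..t} (\<lambda>s. (p/4) * F s) = (p/4) * integral {t0..t} F"
      by simp
    ultimately show ?thesis using yeq[of t] yeq[of t0] that t0p Rform[OF that]
      by (simp add: z_def)
  qed
  have Rpos: "R t \<ge> z t0" if "t \<ge> t0" for t
  proof -
    have "integral {t0..t} F \<ge> 0" by (rule integral_nonneg[OF Fint]) (use Fnn t0p in auto)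
    then show ?thesis using Rform[OF that] p by simp
  qed
  have zt0: "z t0 > 0" using zpos[of t0] t0p c by (smt (verit) mult_pos_pos)
  define Q where "Q t = ln (R t) - \<beta> * ln (M t)" for t
  have Qmono: "Q t0 \<le> Q t" if "t \<ge> t0" for t
  proof (rule DERIV_nonneg_imp_nondecreasing[OF that])
    fix x assume x: "t0 \<le> x" "x \<le> t"
    have xp: "x > 0" using x t0p by auto
    have Rx: "R x > 0" using Rpos[OF x(1)] zt0 by auto
    have Mx: "M x > 0" using Mpos[OF xp] .
    have "(Q has_real_derivative ((p/2) * F x / R x - \<beta> * (y x / M x))) (at x)"
      unfolding Q_def using Rder[of x] Mder[OF xp] x t1p Rx Mx
      by (auto intro!: derivative_eq_intros simp: field_simps)
    moreover have "(p/2) * F x / R x - \<beta> * (y x / M x) \<ge> 0"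
    proof -
      have zx: "z x \<ge> R x" using zR[OF x(1)] .
      have zb: "(p - 2) * z x \<ge> (p + 2) * y0" using zbig[OF x(1)] .
      have "\<beta> * y x * R x \<le> \<beta> * y x * z x" using zx b1 y0 Rx zpos[of x] xp
        by (intro mult_left_mono) (auto simp: z_def)
      also have "\<beta> * y x * z x \<le> (p/2) * z x * z x"
      proof -
        have "\<beta> * y x \<le> (p/2) * z x" using zb unfolding \<beta>_def z_def by (simp add: field_simps)
        then show ?thesis using zposs[OF xp] by (intro mult_right_mono) auto
      qed
      finally have "\<beta> * y x * R x \<le> (p/2) * (z x)^2" by (simp add: power2_eq_square)
      then show ?thesis using Rx Mx by (simp add: F_def field_simps)
    qed
    ultimately show "\<exists>d. (Q has_real_derivative d) (at x) \<and> 0 \<le> d" by blast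
  qed
  define k where "k = R t0 / M t0 powr \<beta>"
  have kp: "k > 0" unfolding k_def using Rpos[of t0] zt0 Mpos[OF t0p] by auto
  have yk: "y t \<ge> k * M t powr \<beta>" if "t \<ge> t0" for t
  proof -
    have tp: "t > 0" using that t0p by auto
    have R0: "R t0 > 0" "R t > 0" using Rpos[of t0] Rpos[OF that] zt0 by auto
    have M0: "M t0 > 0" "M t > 0" using Mpos[OF t0p] Mpos[OF tp] by auto
    have "ln (R t0) - \<beta> * ln (M t0) \<le> ln (R t) - \<beta> * ln (M t)" using Qmono[OF that] by (simp add: Q_def)
    then have "ln (R t0 / M t0 powr \<beta>) \<le> ln (R t / M t powr \<beta>)"
      using R0 M0 by (simp add: ln_div ln_powr)
    then have "k \<le> R t / M t powr \<beta>" unfolding k_def using R0 M0 by simp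
    then have "k * M t powr \<beta> \<le> R t" using M0 by (simp add: field_simps)
    also have "R t \<le> z t" using zR[OF that] .
    also have "z t \<le> y t" using y0 by (simp add: z_def)
    finally show ?thesis .
  qed
  define P where "P t = M t powr (1 - \<beta>) + (\<beta> - 1) * k * t" for t
  have Pmono: "P t \<le> P t0" if "t \<ge> t0" for t
  proof (rule DERIV_nonpos_imp_nonincreasing[OF that])
    fix x assume x: "t0 \<le> x" "x \<le> t"
    have xp: "x > 0" using x t0p by auto
    have Mx: "M x > 0" using Mpos[OF xp] .
    have "(P has_real_derivative ((1 - \<beta>) * M x powr (- \<beta>) * y x + (\<beta> - 1) * k)) (at x)"
    proof -
      have d1: "((\<lambda>t. M t powr (1 - \<beta>)) has_real_derivative (1 - \<beta>) * M x powr (1 - \<beta> - of_nat 1) * y x) (at x)"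
        by (rule DERIV_fun_powr[OF Mder[OF xp] Mx])
      have d2: "((\<lambda>t. (\<beta> - 1) * k * t) has_real_derivative (\<beta> - 1) * k) (at x)"
        by (auto intro!: derivative_eq_intros)
      show ?thesis unfolding P_def using DERIV_add[OF d1 d2] by simp
    qed
    moreover have "(1 - \<beta>) * M x powr (- \<beta>) * y x + (\<beta> - 1) * k \<le> 0"
    proof -
      have "M x powr (- \<beta>) * y x \<ge> M x powr (- \<beta>) * (k * M x powr \<beta>)"
        using yk[OF x(1)] by (intro mult_left_mono) auto
      also have "M x powr (- \<beta>) * (k * M x powr \<beta>) = k" using Mx
        by (simp add: powr_minus field_simps)
      finally have "k \<le> M x powr (- \<beta>) * y x" .
      then have "(\<beta> - 1) * k \<le> (\<beta> - 1) * (M x powr (- \<beta>) * y x)" using b1 by (intro mult_left_mono) auto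
      then show ?thesis by (simp add: algebra_simps)
    qed
    ultimately show "\<exists>d. (P has_real_derivative d) (at x) \<and> d \<le> 0" by blast
  qed
  define t where "t = t0 + P t0 / ((\<beta> - 1) * k) + 1"
  have Pt0: "P t0 > 0"
  proof -
    have "M t0 powr (1 - \<beta>) > 0" using Mpos[OF t0p] by simp
    moreover have "(\<beta> - 1) * k * t0 > 0" using kp b1 t0p by simp
    ultimately show ?thesis unfolding P_def by linarith
  qed
  have tt0: "t \<ge> t0" using Pt0 kp b1 by (simp add: t_def)
  have "P t \<le> P t0" using Pmono[OF tt0] .
  moreover have "P t > P t0"
  proof -
    have "M t powr (1 - \<beta>) > 0" using Mpos[of t] tt0 t0p by auto
    moreover have "(\<beta> - 1) * k * t > P t0"
    proof -
      have a: "(\<beta> - 1) * k > 0" using kp b1 by simp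
      have "(\<beta> - 1) * k * t = (\<beta> - 1) * k * t0 + P t0 + (\<beta> - 1) * k"
        unfolding t_def using a kp b1 by (simp add: distrib_left)
      moreover have "(\<beta> - 1) * k * t0 > 0" using a t0p by simp
      ultimately show ?thesis using a by linarith
    qed
    ultimately show ?thesis unfolding P_def by linarith
  qed
  ultimately show False by simp
qed

locale ws =
  fixes s p lam :: real and \<Omega> :: "'a::euclidean_space set" and T :: real
    and v0 :: "'a \<Rightarrow> real" and v w :: "real \<Rightarrow> 'a \<Rightarrow> real"
  assumes \<Omega>o: "open \<Omega>" and \<Omega>b: "bounded \<Omega>" and p1: "p > 1" and T0: "T > 0"
    and v0W: "v0 \<in> W0 s p \<Omega>" and v0b: "\<exists>M. AE x in lborel. \<bar>v0 x\<bar> \<le> M"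
    and ws: "weak_sol s p lam (p - 1) \<Omega> T v0 v w"
    and ei: "energy_ineq s p lam (p - 1) \<Omega> T v0 v w"
begin

lemma vm: "(\<lambda>z. v (fst z) (snd z)) \<in> borel_measurable (lborel \<Otimes>\<^sub>M lborel)"
  using ws by (simp add: weak_sol_def)
lemma wm: "(\<lambda>z. w (fst z) (snd z)) \<in> borel_measurable (lborel \<Otimes>\<^sub>M lborel)"
  using ws by (simp add: weak_sol_def)

lemma pair_meas: "f \<in> borel_measurable M \<Longrightarrow> (g::_\<Rightarrow>'a) \<in> borel_measurable M \<Longrightarrow>
   (\<lambda>z. (f z, g z)) \<in> measurable M (lborel \<Otimes>\<^sub>M (lborel::'a measure))"
proof -
  assume f: "f \<in> borel_measurable M" and g: "g \<in> borel_measurable M"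
  have "(\<lambda>z. (f z, g z)) \<in> measurable M (borel \<Otimes>\<^sub>M borel)" using f g by measurable
  moreover have "sets (lborel \<Otimes>\<^sub>M lborel) = sets ((borel::real measure) \<Otimes>\<^sub>M (borel::'a measure))"
    by (intro sets_pair_measure_cong) auto
  ultimately show ?thesis by (simp add: measurable_def space_pair_measure)
qed

lemma v_meas[measurable (raw)]: "f \<in> borel_measurable M \<Longrightarrow> g \<in> borel_measurable M \<Longrightarrow>
   (\<lambda>z. v (f z) (g z)) \<in> borel_measurable M"
  using measurable_compose[OF pair_meas vm] by simp
lemma w_meas[measurable (raw)]: "f \<in> borel_measurable M \<Longrightarrow> g \<in> borel_measurable M \<Longrightarrow>
   (\<lambda>z. w (f z) (g z)) \<in> borel_measurable M"
  using measurable_compose[OF pair_meas wm] by simp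

lemma \<Omega>m[measurable]: "\<Omega> \<in> sets lborel" using \<Omega>o by simp

lemma v0m[measurable]: "v0 \<in> borel_measurable lborel"
  using v0W by (simp add: W0_def)

abbreviation N where "N \<equiv> (lborel::real measure) \<Otimes>\<^sub>M (lborel::'a measure)"

lemma \<Omega>fin: "emeasure lborel \<Omega> < \<infinity>" using emeasure_bounded_finite[OF \<Omega>b] .

lemma box_sets[measurable]: "{a<..<b} \<times> \<Omega> \<in> sets N" using \<Omega>o by (intro pair_measureI) auto

lemma box_fin: "emeasure N ({a<..<b} \<times> \<Omega>) < \<infinity>"
proof -
  have "emeasure N ({a<..<b} \<times> \<Omega>) = emeasure lborel {a<..<b} * emeasure lborel \<Omega>"
    using \<Omega>o by (intro lborel.emeasure_pair_measure_Times) auto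
  moreover have "emeasure lborel {a<..<b} < \<infinity>" by (rule emeasure_bounded_finite) simp
  ultimately show ?thesis using \<Omega>fin by (simp add: ennreal_mult_less_top)
qed

lemma box_fin': "emeasure N ({a<..<b} \<times> \<Omega>) < top" using box_fin by simp

lemma vnn: "\<forall>t\<in>{0..<T}. AE x in lborel. 0 \<le> v t x" using ws by (simp add: weak_sol_def)
lemma vW: "AE t in lborel. t \<in> {0<..<T} \<longrightarrow> v t \<in> W0 s p \<Omega>" using ws by (simp add: weak_sol_def)
lemma w2: "(\<integral>\<^sup>+ z\<in>{0<..<T} \<times> \<Omega>. ennreal ((w (fst z) (snd z))\<^sup>2) \<partial>N) < \<infinity>"
  using ws by (simp add: weak_sol_def)
lemma vrep: "\<forall>t\<in>{0..<T}. AE x in lborel. x \<in> \<Omega> \<longrightarrow> v t x = v0 x + (LBINT \<tau>=0..t. w \<tau> x)"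
  using ws by (simp add: weak_sol_def)
lemma weq: "\<forall>\<phi>. test_fun s p \<Omega> T \<phi> \<longrightarrow>
        (\<integral>z\<in>{0<..<T} \<times> \<Omega>. w (fst z) (snd z) * \<phi> (fst z) (snd z) \<partial>N)
        + (LBINT t=0..T. pLap_pair s p (v t) (\<phi> t))
        = lam * (\<integral>z\<in>{0<..<T} \<times> \<Omega>. v (fst z) (snd z) powr (p - 1) * \<phi> (fst z) (snd z) \<partial>N)"
  using ws by (simp add: weak_sol_def)

definition Mb where "Mb = max 0 (SOME M. AE t in lborel. t \<in> {0<..<T} \<longrightarrow> (AE x in lborel. \<bar>v t x\<bar> \<le> M))"
lemma Mb0: "Mb \<ge> 0" by (simp add: Mb_def)
lemma vb: "AE t in lborel. t \<in> {0<..<T} \<longrightarrow> (AE x in lborel. \<bar>v t x\<bar> \<le> Mb)"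
proof -
  have "\<exists>M. AE t in lborel. t \<in> {0<..<T} \<longrightarrow> (AE x in lborel. \<bar>v t x\<bar> \<le> M)"
    using ws by (simp add: weak_sol_def)
  from someI_ex[OF this] show ?thesis unfolding Mb_def
    by (rule eventually_mono) (auto elim: eventually_mono)
qed

definition Kb where "Kb = max 0 (SOME K. AE t in lborel. t \<in> {0<..<T} \<longrightarrow> Wnorm_pow s p (v t) \<le> K)"
lemma Kb0: "Kb \<ge> 0" by (simp add: Kb_def)
lemma vK: "AE t in lborel. t \<in> {0<..<T} \<longrightarrow> Wnorm_pow s p (v t) \<le> Kb"
proof -
  have "\<exists>K. AE t in lborel. t \<in> {0<..<T} \<longrightarrow> Wnorm_pow s p (v t) \<le> K"
    using ws by (simp add: weak_sol_def)
  from someI_ex[OF this] show ?thesis unfolding Kb_def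
    by (rule eventually_mono) auto
qed

definition M0 where "M0 = max 0 (SOME M. AE x in lborel. \<bar>v0 x\<bar> \<le> M)"
lemma v0bd: "AE x in lborel. \<bar>v0 x\<bar> \<le> M0"
proof -
  from someI_ex[OF v0b] show ?thesis unfolding M0_def
    by (rule eventually_mono) auto
qed

lemma vbN: "AE z in N. fst z \<in> {0<..<T} \<longrightarrow> \<bar>v (fst z) (snd z)\<bar> \<le> Mb"
proof (rule lborel_pair.AE_pair_measure)
  show "{x \<in> space N. fst x \<in> {0<..<T} \<longrightarrow> \<bar>v (fst x) (snd x)\<bar> \<le> Mb} \<in> sets N" by measurable
  show "AE x in lborel. AE y in lborel. fst (x, y) \<in> {0<..<T} \<longrightarrow> \<bar>v (fst (x, y)) (snd (x, y))\<bar> \<le> Mb"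
    using vb by (rule eventually_mono) (auto elim: eventually_mono)
qed

lemma vnnN: "AE z in N. fst z \<in> {0..<T} \<longrightarrow> v (fst z) (snd z) \<ge> 0"
proof (rule lborel_pair.AE_pair_measure)
  show "{x \<in> space N. fst x \<in> {0..<T} \<longrightarrow> v (fst x) (snd x) \<ge> 0} \<in> sets N" by measurable
  show "AE x in lborel. AE y in lborel. fst (x, y) \<in> {0..<T} \<longrightarrow> v (fst (x, y)) (snd (x, y)) \<ge> 0"
  proof (rule AE_I2)
    fix x :: real
    show "AE y in lborel. fst (x, y) \<in> {0..<T} \<longrightarrow> v (fst (x, y)) (snd (x, y)) \<ge> 0"
    proof (cases "x \<in> {0..<T}")
      case True
      then show ?thesis using vnn by (auto elim: eventually_mono)
    qed auto
  qed
qed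

lemma intN_bound:
  fixes f :: "real \<times> 'a \<Rightarrow> real"
  assumes [measurable]: "f \<in> borel_measurable N" "A \<in> sets N"
    and "emeasure N A < \<infinity>" and "AE z in N. z \<in> A \<longrightarrow> \<bar>f z\<bar> \<le> B"
  shows "integrable N (\<lambda>z. indicator A z * f z)"
  by (rule integrableI_bounded_set[where A=A and B=B]) (use assms in \<open>auto elim!: eventually_mono split: split_indicator\<close>)

lemma w2int: "integrable N (\<lambda>z. indicator ({0<..<T} \<times> \<Omega>) z * (w (fst z) (snd z))\<^sup>2)"
proof (rule integrableI_bounded)
  show "(\<lambda>z. indicator ({0<..<T} \<times> \<Omega>) z * (w (fst z) (snd z))\<^sup>2) \<in> borel_measurable N" by measurable
  have "(\<integral>\<^sup>+ z. ennreal (norm (indicator ({0<..<T} \<times> \<Omega>) z * (w (fst z) (snd z))\<^sup>2)) \<partial>N)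
      = (\<integral>\<^sup>+ z\<in>{0<..<T} \<times> \<Omega>. ennreal ((w (fst z) (snd z))\<^sup>2) \<partial>N)"
    by (rule nn_integral_cong) (auto split: split_indicator)
  then show "(\<integral>\<^sup>+ z. ennreal (norm (indicator ({0<..<T} \<times> \<Omega>) z * (w (fst z) (snd z))\<^sup>2)) \<partial>N) < \<infinity>"
    using w2 by simp
qed

lemma pow_self: "0 \<le> (a::real) \<Longrightarrow> a powr (p - 1) * a = a powr p"
proof (cases "a = 0")
  case False
  assume "0 \<le> a"
  then have "a > 0" using False by simp
  then have "a powr (p - 1) * a powr 1 = a powr (p - 1 + 1)" by (simp only: powr_add)
  then show ?thesis using \<open>a > 0\<close> by simp
qed simp

abbreviation B :: "real \<Rightarrow> (real \<times> 'a) set" where "B t \<equiv> {0<..<t} \<times> \<Omega>"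

lemma const_int: "integrable N (\<lambda>z. indicator (B t) z * (c::real))"
  by (rule intN_bound[where B="\<bar>c\<bar>"]) (use \<Omega>o in \<open>auto intro!: pair_measureI simp: box_fin'\<close>)

lemma vpow_int: "t \<le> T \<Longrightarrow> integrable N (\<lambda>z. indicator (B t) z * (v (fst z) (snd z) powr (p - 1) * v (fst z) (snd z)))"
proof (rule intN_bound[where B="Mb powr p"])
  assume t: "t \<le> T"
  show "AE z in N. z \<in> B t \<longrightarrow> \<bar>v (fst z) (snd z) powr (p - 1) * v (fst z) (snd z)\<bar> \<le> Mb powr p"
    using vbN vnnN
  proof eventually_elim
    case (elim z)
    show ?case
    proof
      assume z: "z \<in> B t"
      then have "0 \<le> v (fst z) (snd z)" "v (fst z) (snd z) \<le> Mb" using elim t by (auto simp: mem_Times_iff)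
      then show "\<bar>v (fst z) (snd z) powr (p - 1) * v (fst z) (snd z)\<bar> \<le> Mb powr p"
        using p1 by (simp add: pow_self powr_mono2)
    qed
  qed
qed (use \<Omega>o in \<open>auto intro!: pair_measureI simp: box_fin'\<close>)

lemma v2_int: "t \<le> T \<Longrightarrow> integrable N (\<lambda>z. indicator (B t) z * (v (fst z) (snd z))\<^sup>2)"
proof (rule intN_bound[where B="Mb\<^sup>2"])
  assume t: "t \<le> T"
  show "AE z in N. z \<in> B t \<longrightarrow> \<bar>(v (fst z) (snd z))\<^sup>2\<bar> \<le> Mb\<^sup>2"
    using vbN
  proof eventually_elim
    case (elim z)
    show ?case
    proof
      assume z: "z \<in> B t"
      then have "\<bar>v (fst z) (snd z)\<bar> \<le> Mb" using elim t by (auto simp: mem_Times_iff)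
      then have "\<bar>v (fst z) (snd z)\<bar>\<^sup>2 \<le> Mb\<^sup>2" by (intro power_mono) auto
      then show "\<bar>(v (fst z) (snd z))\<^sup>2\<bar> \<le> Mb\<^sup>2" by simp
    qed
  qed
qed (use \<Omega>o in \<open>auto intro!: pair_measureI simp: box_fin'\<close>)

lemma w2_int: "t \<le> T \<Longrightarrow> integrable N (\<lambda>z. indicator (B t) z * (w (fst z) (snd z))\<^sup>2)"
  by (rule Bochner_Integration.integrable_bound[OF w2int]) (auto split: split_indicator simp: mem_Times_iff)

lemma wv_int: "t \<le> T \<Longrightarrow> integrable N (\<lambda>z. indicator (B t) z * (w (fst z) (snd z) * v (fst z) (snd z)))"
proof (rule Bochner_Integration.integrable_bound)
  assume t: "t \<le> T"
  show "integrable N (\<lambda>z. indicator (B T) z * Mb + Mb * (indicator (B T) z * (w (fst z) (snd z))\<^sup>2))"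
    by (intro Bochner_Integration.integrable_add integrable_mult_right const_int w2int)
  show "AE z in N. norm (indicator (B t) z * (w (fst z) (snd z) * v (fst z) (snd z)))
       \<le> norm (indicator (B T) z * Mb + Mb * (indicator (B T) z * (w (fst z) (snd z))\<^sup>2))"
    using vbN
  proof eventually_elim
    case (elim z)
    show ?case
    proof (cases "z \<in> B t")
      case True
      then have zT: "z \<in> B T" using t by (auto simp: mem_Times_iff)
      then have vb: "\<bar>v (fst z) (snd z)\<bar> \<le> Mb" using elim by (auto simp: mem_Times_iff)
      have wb: "\<bar>w (fst z) (snd z)\<bar> \<le> 1 + (w (fst z) (snd z))\<^sup>2"
      proof (cases "\<bar>w (fst z) (snd z)\<bar> \<le> 1")
        case False
        then have "\<bar>w (fst z) (snd z)\<bar> \<le> \<bar>w (fst z) (snd z)\<bar> * \<bar>w (fst z) (snd z)\<bar>"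
          by (intro mult_le_cancel_left1[THEN iffD2]) auto
        then show ?thesis by (simp add: power2_eq_square)
      qed (simp add: add_increasing2)
      have "\<bar>w (fst z) (snd z) * v (fst z) (snd z)\<bar> \<le> (1 + (w (fst z) (snd z))\<^sup>2) * Mb"
        unfolding abs_mult by (rule mult_mono[OF wb vb]) auto
      then show ?thesis using True zT Mb0 by (simp add: algebra_simps)
    qed (simp add: Mb0)
  qed
qed measurable

lemma v_slice[measurable]: "v t \<in> borel_measurable lborel"
proof -
  have "(\<lambda>x. v ((\<lambda>_. t) x) ((\<lambda>x. x) x)) \<in> borel_measurable lborel" by measurable
  then show ?thesis by simp
qed

lemma phi_W0: "(if \<tau> < t then v \<tau> else (\<lambda>x. 0)) = (\<lambda>x. if \<tau> < t then v \<tau> x else 0)"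
  by auto

lemma test_phi:
  assumes t: "0 < t" "t \<le> T"
  shows "test_fun s p \<Omega> T (\<lambda>\<tau> x. if \<tau> < t then v \<tau> x else 0)"
  unfolding test_fun_def
proof (intro conjI)
  show "(\<lambda>z. if fst z < t then v (fst z) (snd z) else 0) \<in> borel_measurable N" by measurable
  show "AE \<tau> in lborel. \<tau> \<in> {0<..<T} \<longrightarrow> (\<lambda>x. if \<tau> < t then v \<tau> x else 0) \<in> W0 s p \<Omega>"
    using vW by (rule eventually_mono) (auto simp: W0_zero simp flip: phi_W0)
  have "(\<integral>\<^sup>+ \<tau>\<in>{0<..<T}. ennreal (Wnorm_pow s p (\<lambda>x. if \<tau> < t then v \<tau> x else 0) powr (1 / p)) \<partial>lborel)
      \<le> (\<integral>\<^sup>+ \<tau>. ennreal (Kb powr (1/p)) * indicator {0<..<T} \<tau> \<partial>lborel)"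
  proof (rule nn_integral_mono_AE)
    show "AE \<tau> in lborel. ennreal (Wnorm_pow s p (\<lambda>x. if \<tau> < t then v \<tau> x else 0) powr (1 / p)) * indicator {0<..<T} \<tau>
        \<le> ennreal (Kb powr (1 / p)) * indicator {0<..<T} \<tau>"
      using vK
    proof eventually_elim
      case (elim \<tau>)
      show ?case
      proof (cases "\<tau> \<in> {0<..<T}")
        case True
        have W0: "Wnorm_pow s p u \<ge> 0" for u :: "'a \<Rightarrow> real" by (simp add: Wnorm_pow_def)
        have "Wnorm_pow s p (\<lambda>x. if \<tau> < t then v \<tau> x else 0) powr (1 / p) \<le> Kb powr (1/p)"
        proof (cases "\<tau> < t")
          case True
          then have "(\<lambda>x. if \<tau> < t then v \<tau> x else 0) = v \<tau>" by auto
          then show ?thesis using elim \<open>\<tau> \<in> {0<..<T}\<close> W0 p1 by (auto intro!: powr_mono2)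
        next
          case False
          then have "(\<lambda>x. if \<tau> < t then v \<tau> x else 0) = (\<lambda>x. 0)" by auto
          then show ?thesis by (simp add: Wnorm_zero)
        qed
        then show ?thesis using True by (auto intro: ennreal_leI)
      qed simp
    qed
  qed
  also have "\<dots> = ennreal (Kb powr (1/p)) * emeasure lborel {0<..<T}"
    by (rule nn_integral_cmult_indicator) simp
  also have "\<dots> < \<infinity>" using T0 by (simp add: ennreal_mult_less_top)
  finally show "(\<integral>\<^sup>+ \<tau>\<in>{0<..<T}. ennreal (Wnorm_pow s p (\<lambda>x. if \<tau> < t then v \<tau> x else 0) powr (1 / p)) \<partial>lborel) < \<infinity>" .
  have "(\<integral>\<^sup>+ z\<in>B T. ennreal ((if fst z < t then v (fst z) (snd z) else 0)\<^sup>2) \<partial>N)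
      \<le> (\<integral>\<^sup>+ z. ennreal (Mb\<^sup>2) * indicator (B T) z \<partial>N)"
  proof (rule nn_integral_mono_AE)
    show "AE z in N. ennreal ((if fst z < t then v (fst z) (snd z) else 0)\<^sup>2) * indicator (B T) z
       \<le> ennreal (Mb\<^sup>2) * indicator (B T) z"
      using vbN
    proof eventually_elim
      case (elim z)
      show ?case
      proof (cases "z \<in> B T")
        case True
        then have "\<bar>v (fst z) (snd z)\<bar> \<le> Mb" using elim by (auto simp: mem_Times_iff)
        then have "\<bar>v (fst z) (snd z)\<bar>\<^sup>2 \<le> Mb\<^sup>2" by (intro power_mono) auto
        then have "(if fst z < t then v (fst z) (snd z) else 0)\<^sup>2 \<le> Mb\<^sup>2" by auto
        then show ?thesis using True by (auto intro: ennreal_leI)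
      qed simp
    qed
  qed
  also have "\<dots> = ennreal (Mb\<^sup>2) * emeasure N (B T)"
    by (rule nn_integral_cmult_indicator) (use \<Omega>o in \<open>auto intro!: pair_measureI\<close>)
  also have "\<dots> < \<infinity>" using box_fin' by (simp add: ennreal_mult_less_top)
  finally show "(\<integral>\<^sup>+ z\<in>B T. ennreal ((if fst z < t then v (fst z) (snd z) else 0)\<^sup>2) \<partial>N) < \<infinity>" .
qed

lemma eqE:
  assumes t: "0 < t" "t \<le> T"
  shows "(\<integral>z. indicator (B t) z * (w (fst z) (snd z) * v (fst z) (snd z)) \<partial>N)
     + (\<integral>\<tau>. indicator {0<..<t} \<tau> * Wnorm_pow s p (v \<tau>) \<partial>lborel)
     = lam * (\<integral>z. indicator (B t) z * (v (fst z) (snd z) powr (p - 1) * v (fst z) (snd z)) \<partial>N)"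
proof -
  define \<phi> where "\<phi> = (\<lambda>\<tau> x. if \<tau> < t then v \<tau> x else 0)"
  have E: "(\<integral>z\<in>B T. w (fst z) (snd z) * \<phi> (fst z) (snd z) \<partial>N)
        + (LBINT \<tau>=0..T. pLap_pair s p (v \<tau>) (\<phi> \<tau>))
        = lam * (\<integral>z\<in>B T. v (fst z) (snd z) powr (p - 1) * \<phi> (fst z) (snd z) \<partial>N)"
    using weq test_phi[OF t] unfolding \<phi>_def by blast
  have e1: "(\<integral>z\<in>B T. w (fst z) (snd z) * \<phi> (fst z) (snd z) \<partial>N)
      = (\<integral>z. indicator (B t) z * (w (fst z) (snd z) * v (fst z) (snd z)) \<partial>N)"
    unfolding set_lebesgue_integral_def
    by (rule Bochner_Integration.integral_cong) (use t in \<open>auto simp: \<phi>_def indicator_def mem_Times_iff\<close>)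
  have e3: "(\<integral>z\<in>B T. v (fst z) (snd z) powr (p - 1) * \<phi> (fst z) (snd z) \<partial>N)
      = (\<integral>z. indicator (B t) z * (v (fst z) (snd z) powr (p - 1) * v (fst z) (snd z)) \<partial>N)"
    unfolding set_lebesgue_integral_def
    by (rule Bochner_Integration.integral_cong) (use t in \<open>auto simp: \<phi>_def indicator_def mem_Times_iff\<close>)
  have e2: "(LBINT \<tau>=0..T. pLap_pair s p (v \<tau>) (\<phi> \<tau>))
      = (\<integral>\<tau>. indicator {0<..<t} \<tau> * Wnorm_pow s p (v \<tau>) \<partial>lborel)"
  proof -
    have "(LBINT \<tau>=0..T. pLap_pair s p (v \<tau>) (\<phi> \<tau>)) = (LBINT \<tau>:{0<..<T}. pLap_pair s p (v \<tau>) (\<phi> \<tau>))"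
      using T0 by (simp add: interval_lebesgue_integral_le_eq zero_ereal_def)
    also have "\<dots> = (\<integral>\<tau>. indicator {0<..<t} \<tau> * Wnorm_pow s p (v \<tau>) \<partial>lborel)"
      unfolding set_lebesgue_integral_def
    proof (rule Bochner_Integration.integral_cong)
      fix \<tau> :: real
      show "indicator {0<..<T} \<tau> *\<^sub>R pLap_pair s p (v \<tau>) (\<phi> \<tau>) = indicator {0<..<t} \<tau> * Wnorm_pow s p (v \<tau>)"
      proof (cases "\<tau> < t")
        case True
        then have "\<phi> \<tau> = v \<tau>" by (auto simp: \<phi>_def)
        then show ?thesis using True t by (simp add: pLap_self indicator_def)
      next
        case False
        then have "\<phi> \<tau> = (\<lambda>x. 0)" by (auto simp: \<phi>_def)
        then show ?thesis using False by (simp add: pLap_zero indicator_def)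
      qed
    qed simp
    finally show ?thesis .
  qed
  show ?thesis using E e1 e2 e3 by simp
qed

lemma fubini_B:
  fixes f :: "real \<Rightarrow> 'a \<Rightarrow> real" and h :: "real \<Rightarrow> real"
  assumes int: "integrable N (\<lambda>z. indicator (B t) z * f (fst z) (snd z))"
    and inner: "\<And>\<tau>. \<tau> \<in> {0<..<t} \<Longrightarrow> (\<integral>x. indicator \<Omega> x * f \<tau> x \<partial>lborel) = h \<tau>"
  shows "integrable lborel (\<lambda>\<tau>. indicator {0<..<t} \<tau> * h \<tau>)"
    and "(\<integral>z. indicator (B t) z * f (fst z) (snd z) \<partial>N) = (\<integral>\<tau>. indicator {0<..<t} \<tau> * h \<tau> \<partial>lborel)"
proof -
  have eq: "(\<integral>x. indicator (B t) (\<tau>, x) * f (fst (\<tau>, x)) (snd (\<tau>, x)) \<partial>lborel) = indicator {0<..<t} \<tau> * h \<tau>" for \<tau>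
  proof (cases "\<tau> \<in> {0<..<t}")
    case True
    have "(\<lambda>x. indicator (B t) (\<tau>, x) * f (fst (\<tau>, x)) (snd (\<tau>, x))) = (\<lambda>x. indicator \<Omega> x * f \<tau> x)"
      using True by (auto simp: indicator_def mem_Times_iff)
    then show ?thesis using inner[OF True] True by simp
  next
    case False
    then have "(\<lambda>x. indicator (B t) (\<tau>, x) * f (fst (\<tau>, x)) (snd (\<tau>, x))) = (\<lambda>x. 0)"
      by (auto simp: indicator_def mem_Times_iff)
    then show ?thesis using False by simp
  qed
  show "integrable lborel (\<lambda>\<tau>. indicator {0<..<t} \<tau> * h \<tau>)"
    using lborel_pair.integrable_fst'[OF int] by (simp only: eq)
  show "(\<integral>z. indicator (B t) z * f (fst z) (snd z) \<partial>N) = (\<integral>\<tau>. indicator {0<..<t} \<tau> * h \<tau> \<partial>lborel)"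
    using lborel_pair.integral_fst'[OF int] by (simp only: eq)
qed

definition G where "G \<tau> = - p * energy s p lam (p - 1) \<Omega> (v \<tau>)"
definition J where "J t = (\<integral>z. indicator (B t) z * (w (fst z) (snd z) * v (fst z) (snd z)) \<partial>N)"
definition Y where "Y \<tau> = Lnorm_pow 2 \<Omega> (v \<tau>)"
definition H where "H \<tau> = (\<integral>z\<in>{0<..<\<tau>} \<times> \<Omega>. (w (fst z) (snd z))\<^sup>2 \<partial>N)"

lemma Lp_inner:
  assumes "\<tau> \<in> {0<..<t}" "t \<le> T"
  shows "(\<integral>x. indicator \<Omega> x * (v \<tau> x powr (p - 1) * v \<tau> x) \<partial>lborel) = Lnorm_pow p \<Omega> (v \<tau>)"
proof -
  have "AE x in lborel. 0 \<le> v \<tau> x" using vnn assms by auto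
  then have "(\<integral>x. indicator \<Omega> x * (v \<tau> x powr (p - 1) * v \<tau> x) \<partial>lborel) = (\<integral>x. indicator \<Omega> x * \<bar>v \<tau> x\<bar> powr p \<partial>lborel)"
    by (intro integral_cong_AE) (auto elim!: eventually_mono simp: pow_self)
  then show ?thesis by (simp add: Lnorm_pow_def set_lebesgue_integral_def)
qed

lemma Y_inner: "(\<integral>x. indicator \<Omega> x * (v \<tau> x)\<^sup>2 \<partial>lborel) = Y \<tau>"
proof -
  have "\<bar>a\<bar> powr 2 = a\<^sup>2" for a :: real by (cases "a = 0") auto
  then show ?thesis by (simp add: Y_def Lnorm_pow_def set_lebesgue_integral_def)
qed

lemma W_int: "t \<le> T \<Longrightarrow> integrable lborel (\<lambda>\<tau>. indicator {0<..<t} \<tau> * Wnorm_pow s p (v \<tau>))"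
proof (rule integrableI_bounded_set[where A="{0<..<t}" and B=Kb])
  assume t: "t \<le> T"
  show "(\<lambda>\<tau>. indicator {0<..<t} \<tau> * Wnorm_pow s p (v \<tau>)) \<in> borel_measurable lborel"
    unfolding Wnorm_pow_def gagliardo_def by measurable
  show "AE x in lborel. x \<in> {0<..<t} \<longrightarrow> norm (indicator {0<..<t} x * Wnorm_pow s p (v x)) \<le> Kb"
    using vK by (rule eventually_mono) (use t in \<open>auto simp: Wnorm_pow_def\<close>)
qed (use emeasure_bounded_finite[of "{0<..<t}"] in auto)

lemma J_G:
  assumes t: "0 < t" "t \<le> T"
  shows "integrable lborel (\<lambda>\<tau>. indicator {0<..<t} \<tau> * G \<tau>)"
    and "J t = (\<integral>\<tau>. indicator {0<..<t} \<tau> * G \<tau> \<partial>lborel)"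
proof -
  have Lpi: "\<And>\<tau>. \<tau> \<in> {0<..<t} \<Longrightarrow> (\<integral>x. indicator \<Omega> x * (v \<tau> x powr (p - 1) * v \<tau> x) \<partial>lborel) = Lnorm_pow p \<Omega> (v \<tau>)"
    using Lp_inner t by auto
  have F1: "integrable lborel (\<lambda>\<tau>. indicator {0<..<t} \<tau> * Lnorm_pow p \<Omega> (v \<tau>))"
    by (rule fubini_B(1)[OF vpow_int[OF t(2)]]) (use Lpi in auto)
  have F2: "(\<integral>z. indicator (B t) z * (v (fst z) (snd z) powr (p - 1) * v (fst z) (snd z)) \<partial>N)
     = (\<integral>\<tau>. indicator {0<..<t} \<tau> * Lnorm_pow p \<Omega> (v \<tau>) \<partial>lborel)"
    by (rule fubini_B(2)[OF vpow_int[OF t(2)]]) (use Lpi in auto)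
  note F = F1 F2
  have Gdef: "indicator {0<..<t} \<tau> * G \<tau> = lam * (indicator {0<..<t} \<tau> * Lnorm_pow p \<Omega> (v \<tau>)) - indicator {0<..<t} \<tau> * Wnorm_pow s p (v \<tau>)" for \<tau>
    using p1 by (simp add: G_def energy_def algebra_simps)
  show "integrable lborel (\<lambda>\<tau>. indicator {0<..<t} \<tau> * G \<tau>)"
    unfolding Gdef using F(1) W_int[OF t(2)] by auto
  have "J t = lam * (\<integral>\<tau>. indicator {0<..<t} \<tau> * Lnorm_pow p \<Omega> (v \<tau>) \<partial>lborel) - (\<integral>\<tau>. indicator {0<..<t} \<tau> * Wnorm_pow s p (v \<tau>) \<partial>lborel)"
    using eqE[OF t, unfolded F2] unfolding J_def by linarith
  also have "\<dots> = (\<integral>\<tau>. indicator {0<..<t} \<tau> * G \<tau> \<partial>lborel)"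
    unfolding Gdef using F(1) W_int[OF t(2)] by simp
  finally show "J t = (\<integral>\<tau>. indicator {0<..<t} \<tau> * G \<tau> \<partial>lborel)" .
qed

lemma G_low: "\<tau> \<in> {0..<T} \<Longrightarrow> G \<tau> \<ge> p * H \<tau> - p * energy s p lam (p - 1) \<Omega> v0"
proof -
  assume "\<tau> \<in> {0..<T}"
  then have "H \<tau> + energy s p lam (p - 1) \<Omega> (v \<tau>) \<le> energy s p lam (p - 1) \<Omega> v0"
    using ei by (simp add: energy_ineq_def H_def)
  then have "p * (H \<tau> + energy s p lam (p - 1) \<Omega> (v \<tau>)) \<le> p * energy s p lam (p - 1) \<Omega> v0"
    using p1 by (intro mult_left_mono) auto
  then show ?thesis by (simp add: G_def algebra_simps)
qed

lemma H_int: "H t = (\<integral>z. indicator (B t) z * (w (fst z) (snd z))\<^sup>2 \<partial>N)"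
  by (simp add: H_def set_lebesgue_integral_def)

lemma H_nn: "H t \<ge> 0"
  unfolding H_int by (rule Bochner_Integration.integral_nonneg) auto

lemma Y_int: "0 < t \<Longrightarrow> t \<le> T \<Longrightarrow> integrable lborel (\<lambda>\<tau>. indicator {0<..<t} \<tau> * Y \<tau>)"
  by (rule fubini_B(1)[OF v2_int]) (auto simp: Y_inner)

lemma v2_Y: "0 < t \<Longrightarrow> t \<le> T \<Longrightarrow> (\<integral>z. indicator (B t) z * (v (fst z) (snd z))\<^sup>2 \<partial>N) = (\<integral>\<tau>. indicator {0<..<t} \<tau> * Y \<tau> \<partial>lborel)"
  by (rule fubini_B(2)[OF v2_int]) (auto simp: Y_inner)

lemma J_CS:
  assumes t: "0 < t" "t \<le> T" and e: "e > 0"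
  shows "J t \<le> e * H t + (\<integral>\<tau>. indicator {0<..<t} \<tau> * Y \<tau> \<partial>lborel) / (4 * e)"
proof -
  have pt: "a * b \<le> e * a\<^sup>2 + b\<^sup>2 / (4 * e)" for a b :: real
  proof -
    have "e * a\<^sup>2 + b\<^sup>2 / (4 * e) - a * b = (2 * e * a - b)\<^sup>2 / (4 * e)"
      using e by (simp add: power2_eq_square field_simps)
    moreover have "(2 * e * a - b)\<^sup>2 / (4 * e) \<ge> 0" using e by simp
    ultimately show ?thesis by linarith
  qed
  have "J t \<le> (\<integral>z. e * (indicator (B t) z * (w (fst z) (snd z))\<^sup>2) + (indicator (B t) z * (v (fst z) (snd z))\<^sup>2) / (4 * e) \<partial>N)"
    unfolding J_def
  proof (rule integral_mono)
    show "integrable N (\<lambda>z. indicator (B t) z * (w (fst z) (snd z) * v (fst z) (snd z)))"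
      using wv_int[OF t(2)] .
    show "integrable N (\<lambda>z. e * (indicator (B t) z * (w (fst z) (snd z))\<^sup>2) + indicator (B t) z * (v (fst z) (snd z))\<^sup>2 / (4 * e))"
      using w2_int[OF t(2)] v2_int[OF t(2)] by auto
    fix z
    show "indicator (B t) z * (w (fst z) (snd z) * v (fst z) (snd z)) \<le> e * (indicator (B t) z * (w (fst z) (snd z))\<^sup>2) + indicator (B t) z * (v (fst z) (snd z))\<^sup>2 / (4 * e)"
      using pt[of "w (fst z) (snd z)" "v (fst z) (snd z)"] by (auto simp: indicator_def)
  qed
  also have "\<dots> = e * H t + (\<integral>z. indicator (B t) z * (v (fst z) (snd z))\<^sup>2 \<partial>N) / (4 * e)"
    using w2_int[OF t(2)] v2_int[OF t(2)] by (simp add: H_int)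
  also have "\<dots> = e * H t + (\<integral>\<tau>. indicator {0<..<t} \<tau> * Y \<tau> \<partial>lborel) / (4 * e)"
    using v2_Y[OF t] by simp
  finally show ?thesis .
qed

definition V where "V \<tau> x = v0 x + (\<integral>\<sigma>. indicator {0<..<\<tau>} \<sigma> * w \<sigma> x \<partial>lborel)"

lemma Vm: "(\<lambda>z. V (fst z) (snd z)) \<in> borel_measurable N"
  unfolding V_def indicator_def greaterThanLessThan_iff of_bool_def by measurable

lemma V_meas[measurable (raw)]: "f \<in> borel_measurable M \<Longrightarrow> g \<in> borel_measurable M \<Longrightarrow>
   (\<lambda>z. V (f z) (g z)) \<in> borel_measurable M"
  using measurable_compose[OF pair_meas Vm] by simp

lemma LBINT_eq: "0 \<le> (\<tau>::real) \<Longrightarrow> (LBINT \<sigma>=0..\<tau>. w \<sigma> x) = (\<integral>\<sigma>. indicator {0<..<\<tau>} \<sigma> * w \<sigma> x \<partial>lborel)"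
  by (simp add: interval_lebesgue_integral_le_eq zero_ereal_def set_lebesgue_integral_def)

lemma vrep': "\<tau> \<in> {0..<T} \<Longrightarrow> AE x in lborel. x \<in> \<Omega> \<longrightarrow> v \<tau> x = V \<tau> x"
  using vrep by (auto simp: V_def LBINT_eq)

lemma stepC: "AE x in lborel. x \<in> \<Omega> \<longrightarrow> (AE \<tau> in lborel. \<tau> \<in> {0<..<T} \<longrightarrow> v \<tau> x = V \<tau> x)"
proof -
  let ?P = "\<lambda>\<tau> x. \<tau> \<in> {0<..<T} \<and> x \<in> \<Omega> \<longrightarrow> v \<tau> x = V \<tau> x"
  have S: "{z \<in> space N. ?P (fst z) (snd z)} \<in> sets N" by measurable
  have "AE z in N. ?P (fst z) (snd z)"
  proof (rule lborel_pair.AE_pair_measure)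
    show "{z \<in> space N. ?P (fst z) (snd z)} \<in> sets N" using S .
    show "AE \<tau> in lborel. AE x in lborel. ?P (fst (\<tau>, x)) (snd (\<tau>, x))"
    proof (rule AE_I2)
      fix \<tau> :: real
      show "AE x in lborel. ?P (fst (\<tau>, x)) (snd (\<tau>, x))"
      proof (cases "\<tau> \<in> {0<..<T}")
        case True
        then show ?thesis using vrep'[of \<tau>] by (auto elim: eventually_mono)
      qed auto
    qed
  qed
  then have "AE \<tau> in lborel. AE x in lborel. ?P \<tau> x"
    using lborel_pair.AE_pair_iff[OF S] by simp
  then have "AE x in lborel. AE \<tau> in lborel. ?P \<tau> x"
    using lborel_pair.AE_commute[OF S] by simp
  then show ?thesis by (rule eventually_mono) (auto elim: eventually_mono)
qed

lemma L2L1: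
  fixes g :: "real \<Rightarrow> real"
  assumes [measurable]: "g \<in> borel_measurable lborel" "A \<in> sets lborel"
    and fin: "emeasure lborel A < \<infinity>" and sq: "(\<integral>\<^sup>+\<tau>. ennreal ((g \<tau>)\<^sup>2) * indicator A \<tau> \<partial>lborel) < \<infinity>"
  shows "integrable lborel (\<lambda>\<tau>. indicator A \<tau> * g \<tau>)"
proof (rule integrableI_bounded)
  show "(\<lambda>\<tau>. indicator A \<tau> * g \<tau>) \<in> borel_measurable lborel" by measurable
  have "(\<integral>\<^sup>+\<tau>. ennreal (norm (indicator A \<tau> * g \<tau>)) \<partial>lborel)
      \<le> (\<integral>\<^sup>+\<tau>. indicator A \<tau> + ennreal ((g \<tau>)\<^sup>2) * indicator A \<tau> \<partial>lborel)"
  proof (rule nn_integral_mono)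
    fix \<tau>
    have wb: "\<bar>g \<tau>\<bar> \<le> 1 + (g \<tau>)\<^sup>2"
    proof (cases "\<bar>g \<tau>\<bar> \<le> 1")
      case False
      then have "\<bar>g \<tau>\<bar> \<le> \<bar>g \<tau>\<bar> * \<bar>g \<tau>\<bar>"
        by (intro mult_le_cancel_left1[THEN iffD2]) auto
      then show ?thesis by (simp add: power2_eq_square)
    qed (simp add: add_increasing2)
    then have "ennreal \<bar>g \<tau>\<bar> \<le> 1 + ennreal ((g \<tau>)\<^sup>2)"
      by (metis ennreal_leI ennreal_plus ennreal_1 zero_le_one zero_le_power2)
    then show "ennreal (norm (indicator A \<tau> * g \<tau>)) \<le> indicator A \<tau> + ennreal ((g \<tau>)\<^sup>2) * indicator A \<tau>"
      by (auto split: split_indicator)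
  qed
  also have "\<dots> = emeasure lborel A + (\<integral>\<^sup>+\<tau>. ennreal ((g \<tau>)\<^sup>2) * indicator A \<tau> \<partial>lborel)"
    by (subst nn_integral_add) (use assms(2) in auto)
  also have "\<dots> < \<infinity>" using fin sq by simp
  finally show "(\<integral>\<^sup>+\<tau>. ennreal (norm (indicator A \<tau> * g \<tau>)) \<partial>lborel) < \<infinity>" .
qed

lemma stepA: "AE x in lborel. x \<in> \<Omega> \<longrightarrow> integrable lborel (\<lambda>\<tau>. indicator {0<..<T} \<tau> * w \<tau> x)"
proof -
  define f where "f z = ennreal ((w (fst z) (snd z))\<^sup>2) * indicator (B T) z" for z
  have fm[measurable]: "f \<in> borel_measurable N" unfolding f_def by measurable
  have "(\<integral>\<^sup>+ x. (\<integral>\<^sup>+ \<tau>. f (\<tau>, x) \<partial>lborel) \<partial>lborel) = integral\<^sup>N N f"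
    by (rule lborel_pair.nn_integral_snd[OF fm])
  also have "\<dots> < \<infinity>" using w2 unfolding f_def by simp
  finally have "AE x in lborel. (\<integral>\<^sup>+ \<tau>. f (\<tau>, x) \<partial>lborel) \<noteq> \<infinity>"
    by (intro nn_integral_PInf_AE) auto
  then show ?thesis
  proof (rule eventually_mono, intro impI)
    fix x assume fin: "(\<integral>\<^sup>+ \<tau>. f (\<tau>, x) \<partial>lborel) \<noteq> \<infinity>" and x: "x \<in> \<Omega>"
    have "(\<lambda>\<tau>. f (\<tau>, x)) = (\<lambda>\<tau>. ennreal ((w \<tau> x)\<^sup>2) * indicator {0<..<T} \<tau>)"
      using x by (auto simp: f_def indicator_def mem_Times_iff)
    then have "(\<integral>\<^sup>+\<tau>. ennreal ((w \<tau> x)\<^sup>2) * indicator {0<..<T} \<tau> \<partial>lborel) < \<infinity>"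
      using fin by (simp add: less_top)
    then show "integrable lborel (\<lambda>\<tau>. indicator {0<..<T} \<tau> * w \<tau> x)"
      using emeasure_bounded_finite[of "{0<..<T}"] by (intro L2L1) auto
  qed
qed

lemma Lnorm2: "Lnorm_pow 2 \<Omega> u = (\<integral>x. indicator \<Omega> x * (u x)\<^sup>2 \<partial>lborel)"
proof -
  have "\<bar>a\<bar> powr 2 = a\<^sup>2" for a :: real by (cases "a = 0") auto
  then show ?thesis by (simp add: Lnorm_pow_def set_lebesgue_integral_def)
qed

lemma perx:
  assumes x: "x \<in> \<Omega>" and ae: "AE \<tau> in lborel. \<tau> \<in> {0<..<T} \<longrightarrow> v \<tau> x = V \<tau> x"
    and wi: "integrable lborel (\<lambda>\<tau>. indicator {0<..<T} \<tau> * w \<tau> x)"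
    and t: "0 < t" "t \<le> T"
  shows "(\<integral>\<tau>. indicator (B t) (\<tau>, x) * (w \<tau> x * v \<tau> x) \<partial>lborel) = ((V t x)\<^sup>2 - (v0 x)\<^sup>2) / 2"
proof -
  define f where "f \<tau> = w \<tau> x" for \<tau>
  have fm[measurable]: "f \<in> borel_measurable lborel" unfolding f_def by measurable
  have fi: "integrable lborel (\<lambda>\<tau>. indicator {0<..<t} \<tau> * f \<tau>)"
    by (rule Bochner_Integration.integrable_bound[OF wi]) (use t in \<open>auto simp: f_def split: split_indicator\<close>)
  define I where "I \<tau> = (\<integral>\<sigma>. indicator {0<..<\<tau>} \<sigma> * f \<sigma> \<partial>lborel)" for \<tau>
  have VI: "V \<tau> x = v0 x + I \<tau>" for \<tau> by (simp add: V_def I_def f_def)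
  have Im[measurable]: "I \<in> borel_measurable lborel"
  proof -
    have "(\<lambda>\<tau>. V \<tau> x - v0 x) \<in> borel_measurable lborel" by measurable
    then show ?thesis by (simp add: VI)
  qed
  have tri1: "integrable lborel (\<lambda>\<tau>. indicator {0<..<t} \<tau> * (f \<tau> * I \<tau>))"
    using triangle(1)[OF fi fm] by (simp add: I_def)
  have tri2: "(\<integral>\<tau>. indicator {0<..<t} \<tau> * (f \<tau> * I \<tau>) \<partial>lborel) = (I t)\<^sup>2 / 2"
    using triangle(2)[OF fi fm] by (simp add: I_def)
  have "(\<integral>\<tau>. indicator (B t) (\<tau>, x) * (w \<tau> x * v \<tau> x) \<partial>lborel)
      = (\<integral>\<tau>. v0 x * (indicator {0<..<t} \<tau> * f \<tau>) + indicator {0<..<t} \<tau> * (f \<tau> * I \<tau>) \<partial>lborel)"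
  proof (rule integral_cong_AE)
    show "AE \<tau> in lborel. indicator (B t) (\<tau>, x) * (w \<tau> x * v \<tau> x)
        = v0 x * (indicator {0<..<t} \<tau> * f \<tau>) + indicator {0<..<t} \<tau> * (f \<tau> * I \<tau>)"
      using ae
    proof (rule eventually_mono)
      fix \<tau> assume h: "\<tau> \<in> {0<..<T} \<longrightarrow> v \<tau> x = V \<tau> x"
      show "indicator (B t) (\<tau>, x) * (w \<tau> x * v \<tau> x)
        = v0 x * (indicator {0<..<t} \<tau> * f \<tau>) + indicator {0<..<t} \<tau> * (f \<tau> * I \<tau>)"
      proof (cases "\<tau> \<in> {0<..<t}")
        case True
        then have "v \<tau> x = v0 x + I \<tau>" using h t VI by auto
        then show ?thesis using True x by (simp add: indicator_def f_def algebra_simps)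
      qed (auto simp: indicator_def)
    qed
  qed measurable
  also have "\<dots> = v0 x * (\<integral>\<tau>. indicator {0<..<t} \<tau> * f \<tau> \<partial>lborel) + (I t)\<^sup>2 / 2"
    using fi tri1 tri2 by simp
  also have "(\<integral>\<tau>. indicator {0<..<t} \<tau> * f \<tau> \<partial>lborel) = I t" by (simp add: I_def)
  finally show ?thesis by (simp add: VI power2_eq_square algebra_simps)
qed

lemma v0sq_int: "integrable lborel (\<lambda>x. indicator \<Omega> x * (v0 x)\<^sup>2)"
proof (rule integrableI_bounded_set[where A=\<Omega> and B="M0\<^sup>2"])
  show "AE x in lborel. x \<in> \<Omega> \<longrightarrow> norm (indicator \<Omega> x * (v0 x)\<^sup>2) \<le> M0\<^sup>2"
    using v0bd
  proof (rule eventually_mono, intro impI)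
    fix x assume "\<bar>v0 x\<bar> \<le> M0" "x \<in> \<Omega>"
    then have "\<bar>v0 x\<bar>\<^sup>2 \<le> M0\<^sup>2" by (intro power_mono) auto
    then show "norm (indicator \<Omega> x * (v0 x)\<^sup>2) \<le> M0\<^sup>2" using \<open>x \<in> \<Omega>\<close> by simp
  qed
qed (use \<Omega>fin \<Omega>o in auto)

lemma chain_rule:
  assumes t: "0 < t" "t < T"
  shows "J t = (Y t - Lnorm_pow 2 \<Omega> v0) / 2"
proof -
  define F where "F \<tau> x = indicator (B t) (\<tau>, x) * (w \<tau> x * v \<tau> x)" for \<tau> x
  have cp: "(\<lambda>z. indicator (B t) z * (w (fst z) (snd z) * v (fst z) (snd z))) = case_prod F"
    by (auto simp: F_def fun_eq_iff)
  have Fi: "integrable N (case_prod F)" using wv_int[of t] t by (simp add: cp)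
  have J1: "J t = (\<integral>x. (\<integral>\<tau>. F \<tau> x \<partial>lborel) \<partial>lborel)"
    unfolding J_def cp using lborel_pair.integral_snd[OF Fi] by simp
  have Ji: "integrable lborel (\<lambda>x. \<integral>\<tau>. F \<tau> x \<partial>lborel)"
    using lborel_pair.integrable_snd[OF Fi] .
  define D where "D x = indicator \<Omega> x * (((v t x)\<^sup>2 - (v0 x)\<^sup>2) / 2)" for x
  have Dm[measurable]: "D \<in> borel_measurable lborel" unfolding D_def by measurable
  have vt: "AE x in lborel. x \<in> \<Omega> \<longrightarrow> v t x = V t x" using vrep' t by auto
  have ae: "AE x in lborel. (\<integral>\<tau>. F \<tau> x \<partial>lborel) = D x"
    using stepC stepA vt
  proof eventually_elim
    case (elim x)
    show ?case
    proof (cases "x \<in> \<Omega>")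
      case True
      have "(\<integral>\<tau>. F \<tau> x \<partial>lborel) = ((V t x)\<^sup>2 - (v0 x)\<^sup>2) / 2"
        unfolding F_def using perx[OF True _ _ t(1)] elim True t by auto
      also have "V t x = v t x" using elim True t by auto
      finally show ?thesis using True by (simp add: D_def)
    next
      case False
      then have "(\<lambda>\<tau>. F \<tau> x) = (\<lambda>\<tau>. 0)" by (auto simp: F_def indicator_def mem_Times_iff)
      then show ?thesis using False by (simp add: D_def)
    qed
  qed
  have Di: "integrable lborel D"
    by (rule integrable_cong_AE_imp[OF Ji Dm ae])
  have J2: "J t = (\<integral>x. D x \<partial>lborel)"
    unfolding J1 by (rule integral_cong_AE) (use ae borel_measurable_integrable[OF Ji] in auto)
  have vti: "integrable lborel (\<lambda>x. indicator \<Omega> x * (v t x)\<^sup>2)"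
  proof -
    have "(\<lambda>x. indicator \<Omega> x * (v t x)\<^sup>2) = (\<lambda>x. 2 * D x + indicator \<Omega> x * (v0 x)\<^sup>2)"
      by (auto simp: D_def fun_eq_iff indicator_def)
    then show ?thesis using Di v0sq_int by simp
  qed
  have "(\<integral>x. D x \<partial>lborel) = ((\<integral>x. indicator \<Omega> x * (v t x)\<^sup>2 \<partial>lborel) - (\<integral>x. indicator \<Omega> x * (v0 x)\<^sup>2 \<partial>lborel)) / 2"
  proof -
    have "(\<lambda>x. D x) = (\<lambda>x. (indicator \<Omega> x * (v t x)\<^sup>2 - indicator \<Omega> x * (v0 x)\<^sup>2) / 2)"
      by (auto simp: D_def fun_eq_iff indicator_def)
    then show ?thesis using vti v0sq_int by simp
  qed
  then show ?thesis using J2 by (simp add: Y_def Lnorm2)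
qed

lemma Y0: "Y 0 = Lnorm_pow 2 \<Omega> v0"
proof -
  have "AE x in lborel. x \<in> \<Omega> \<longrightarrow> v 0 x = v0 x"
    using vrep'[of 0] T0 by (auto simp: V_def elim!: eventually_mono)
  then have "(\<integral>x. indicator \<Omega> x * (v 0 x)\<^sup>2 \<partial>lborel) = (\<integral>x. indicator \<Omega> x * (v0 x)\<^sup>2 \<partial>lborel)"
    by (intro integral_cong_AE) (auto elim!: eventually_mono simp: indicator_def)
  then show ?thesis by (simp add: Y_def Lnorm2)
qed

lemma final_facts:
  assumes t: "0 < t" "t < T"
  shows "(\<lambda>\<tau>. - p * energy s p lam (p - 1) \<Omega> (v \<tau>)) integrable_on {0..t}"
    and "Lnorm_pow 2 \<Omega> (v t) = Lnorm_pow 2 \<Omega> v0 + 2 * integral {0..t} (\<lambda>\<tau>. - p * energy s p lam (p - 1) \<Omega> (v \<tau>))"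
    and "\<And>e. e > 0 \<Longrightarrow> (Lnorm_pow 2 \<Omega> (v t) - Lnorm_pow 2 \<Omega> v0) / 2 \<le>
           e * (\<integral>z\<in>{0<..<t} \<times> \<Omega>. (w (fst z) (snd z))\<^sup>2 \<partial>N) + integral {0..t} (\<lambda>\<tau>. Lnorm_pow 2 \<Omega> (v \<tau>)) / (4 * e)"
proof -
  note Gi = J_G(1)[OF t(1) less_imp_le[OF t(2)]]
  note Gq = J_G(2)[OF t(1) less_imp_le[OF t(2)]]
  note HG = HK_conv[OF Gi]
  show "(\<lambda>\<tau>. - p * energy s p lam (p - 1) \<Omega> (v \<tau>)) integrable_on {0..t}"
    using HG(1) by (simp add: G_def)
  show "Lnorm_pow 2 \<Omega> (v t) = Lnorm_pow 2 \<Omega> v0 + 2 * integral {0..t} (\<lambda>\<tau>. - p * energy s p lam (p - 1) \<Omega> (v \<tau>))"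
    using chain_rule[OF t] Gq HG(2) by (simp add: G_def Y_def)
  note HY = HK_conv[OF Y_int[OF t(1) less_imp_le[OF t(2)]]]
  fix e :: real assume e: "e > 0"
  show "(Lnorm_pow 2 \<Omega> (v t) - Lnorm_pow 2 \<Omega> v0) / 2 \<le>
           e * (\<integral>z\<in>{0<..<t} \<times> \<Omega>. (w (fst z) (snd z))\<^sup>2 \<partial>N) + integral {0..t} (\<lambda>\<tau>. Lnorm_pow 2 \<Omega> (v \<tau>)) / (4 * e)"
    using J_CS[OF t(1) less_imp_le[OF t(2)] e] chain_rule[OF t] HY(2) by (simp add: H_def Y_def)
qed

lemma G_low': "\<tau> \<in> {0..<T} \<Longrightarrow> - p * energy s p lam (p - 1) \<Omega> (v \<tau>) \<ge>
   p * (\<integral>z\<in>{0<..<\<tau>} \<times> \<Omega>. (w (fst z) (snd z))\<^sup>2 \<partial>N) - p * energy s p lam (p - 1) \<Omega> v0"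
  using G_low by (simp add: G_def H_def)

lemma H_nn': "(\<integral>z\<in>{0<..<\<tau>} \<times> \<Omega>. (w (fst z) (snd z))\<^sup>2 \<partial>N) \<ge> 0"
  using H_nn by (simp add: H_def)

lemma Y0': "Lnorm_pow 2 \<Omega> (v 0) = Lnorm_pow 2 \<Omega> v0"
  using Y0 by (simp add: Y_def)

end

lemma growth:
  fixes y g :: "real \<Rightarrow> real"
  assumes gint: "\<And>t. t \<ge> 0 \<Longrightarrow> g integrable_on {0..t}"
  and yeq: "\<And>t. t \<ge> 0 \<Longrightarrow> y t = y0 + 2 * integral {0..t} g"
  and gc: "\<And>t. t \<ge> 0 \<Longrightarrow> g t \<ge> c"
  and t: "t \<ge> 0"
  shows "y t \<ge> y0 + 2 * c * t"
proof -
  have "integral {0..t} (\<lambda>_. c) \<le> integral {0..t} g"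
    by (rule integral_le[OF _ gint[OF t]]) (use gc in auto)
  then show ?thesis using yeq[OF t] t by (simp add: mult.commute)
qed

lemma Lnorm_nn: "Lnorm_pow r \<Omega> u \<ge> 0"
  unfolding Lnorm_pow_def set_lebesgue_integral_def
  by (rule Bochner_Integration.integral_nonneg) auto

theorem lemma3p9:
  fixes \<Omega> :: "'a::euclidean_space set"
    and s p lam :: real
    and v0 :: "'a \<Rightarrow> real"
    and v :: "real \<Rightarrow> 'a \<Rightarrow> real"
  assumes "DIM('a) \<ge> 2"
    and "C11_domain \<Omega>"
    and "0 < s" and "s < 1" and "1 < p"
    and "lam > lambda1 s p \<Omega>"
    and "v0 \<in> W0 s p \<Omega>"
    and "\<exists>M. AE x in lborel. \<bar>v0 x\<bar> \<le> M"
    and "AE x in lborel. v0 x \<ge> 0"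
    and "\<not> (AE x in lborel. v0 x = 0)"
    and "energy s p lam (p - 1) \<Omega> v0 < 0"
  shows "(p \<le> 2 \<longrightarrow> global_sol s p lam (p - 1) \<Omega> v0 v \<longrightarrow>
            filterlim (\<lambda>t. sqrt (Lnorm_pow 2 \<Omega> (v t))) at_top at_top)
       \<and> (p > 2 \<longrightarrow> \<not> global_sol s p lam (p - 1) \<Omega> v0 v)"
proof -
  have \<Omega>o: "open \<Omega>" and \<Omega>b: "bounded \<Omega>" using assms(2) by (auto simp: C11_domain_def)
  define E0 where "E0 = energy s p lam (p - 1) \<Omega> v0"
  define c where "c = - p * E0"
  have c: "c > 0" using assms(5,11) by (simp add: c_def E0_def mult_pos_neg)
  define y0 where "y0 = Lnorm_pow 2 \<Omega> v0"
  have y0: "y0 \<ge> 0" by (simp add: y0_def Lnorm_nn)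
  define g where "g = (\<lambda>\<tau>. - p * energy s p lam (p - 1) \<Omega> (v \<tau>))"
  define y where "y = (\<lambda>\<tau>. Lnorm_pow 2 \<Omega> (v \<tau>))"
  have key: "(\<forall>t\<ge>0. g integrable_on {0..t}) \<and> (\<forall>t\<ge>0. y t = y0 + 2 * integral {0..t} g)
     \<and> (\<exists>H. (\<forall>t\<ge>0. g t \<ge> p * H t + c) \<and> (\<forall>t\<ge>0. H t \<ge> 0) \<and>
         (\<forall>t e. t > 0 \<longrightarrow> e > 0 \<longrightarrow> (y t - y0)/2 \<le> e * H t + integral {0..t} y / (4*e)))"
    if gs: "global_sol s p lam (p - 1) \<Omega> v0 v"
  proof -
    obtain w where W: "\<And>T. T > 0 \<Longrightarrow> weak_sol s p lam (p - 1) \<Omega> T v0 v w \<and> energy_ineq s p lam (p - 1) \<Omega> T v0 v w"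
      using gs by (auto simp: global_sol_def)
    have loc: "ws s p lam \<Omega> T v0 v w" if "T > 0" for T
      using W[OF that] that \<Omega>o \<Omega>b assms(5,7,8) by unfold_locales auto
    define H where "H \<tau> = (\<integral>z\<in>{0<..<\<tau>} \<times> \<Omega>. (w (fst z) (snd z))\<^sup>2 \<partial>((lborel::real measure) \<Otimes>\<^sub>M (lborel::'a measure)))" for \<tau>
    have gint: "g integrable_on {0..t}" if "t \<ge> 0" for t
    proof -
      have "g integrable_on {0..t+1}"
        using ws.final_facts(1)[OF loc[of "t+2"], of "t+1"] that by (simp add: g_def)
      then show ?thesis by (rule integrable_subinterval_real) auto
    qed
    have yeq: "y t = y0 + 2 * integral {0..t} g" if "t \<ge> 0" for t
    proof (cases "t = 0")
      case True
      then show ?thesis using ws.Y0'[OF loc[of 1]] by (simp add: y_def y0_def)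
    next
      case False
      then show ?thesis using ws.final_facts(2)[OF loc[of "t+1"], of t] that
        by (simp add: y_def y0_def g_def)
    qed
    have gH: "g t \<ge> p * H t + c" if "t \<ge> 0" for t
      using ws.G_low'[OF loc[of "t+1"], of t] that by (simp add: g_def H_def c_def E0_def)
    have H0: "H t \<ge> 0" for t
      using ws.H_nn'[OF loc[of 1]] by (simp add: H_def)
    have CS: "(y t - y0)/2 \<le> e * H t + integral {0..t} y / (4*e)" if "t > 0" "e > 0" for t e
      using ws.final_facts(3)[OF loc[of "t+1"], of t e] that by (simp add: y_def y0_def H_def)
    show ?thesis using gint yeq gH H0 CS by blast
  qed
  show ?thesis
  proof (intro conjI impI)
    assume p2: "p \<le> 2" and gs: "global_sol s p lam (p - 1) \<Omega> v0 v"
    obtain H where H: "\<forall>t\<ge>0. g t \<ge> p * H t + c" "\<forall>t\<ge>0. H t \<ge> 0" using key[OF gs] by blast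
    have gc: "g t \<ge> c" if "t \<ge> 0" for t
    proof -
      have "p * H t \<ge> 0" using H(2) that assms(5) by simp
      then show ?thesis using H(1) that by fastforce
    qed
    have gr: "y t \<ge> y0 + 2 * c * t" if "t \<ge> 0" for t
      using growth[of g y y0 c t] key[OF gs] gc that by blast
    show "filterlim (\<lambda>t. sqrt (Lnorm_pow 2 \<Omega> (v t))) at_top at_top"
      unfolding filterlim_at_top
    proof
      fix Z :: real
      show "eventually (\<lambda>t. Z \<le> sqrt (Lnorm_pow 2 \<Omega> (v t))) at_top"
        unfolding eventually_at_top_linorder
      proof (intro exI allI impI)
        fix t assume t: "t \<ge> Z\<^sup>2 / (2 * c)"
        have t0: "t \<ge> 0" using t c by (smt (verit) divide_nonneg_pos zero_le_power2)
        have "Z\<^sup>2 \<le> 2 * c * t" using t c by (simp add: field_simps)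
        also have "\<dots> \<le> y t" using gr[OF t0] y0 by linarith
        finally have "Z\<^sup>2 \<le> y t" .
        then have "\<bar>Z\<bar> \<le> sqrt (y t)" using real_le_rsqrt by (metis real_sqrt_abs real_sqrt_le_mono)
        then show "Z \<le> sqrt (Lnorm_pow 2 \<Omega> (v t))" by (simp add: y_def)
      qed
    qed
  next
    assume p2: "p > 2"
    show "\<not> global_sol s p lam (p - 1) \<Omega> v0 v"
    proof
      assume gs: "global_sol s p lam (p - 1) \<Omega> v0 v"
      obtain H where H: "\<forall>t\<ge>0. g t \<ge> p * H t + c" "\<forall>t\<ge>0. H t \<ge> 0"
        "\<forall>t e. t > 0 \<longrightarrow> e > 0 \<longrightarrow> (y t - y0)/2 \<le> e * H t + integral {0..t} y / (4*e)"
        using key[OF gs] by blast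
      show False
        by (rule blowup_abstract[of p c y0 g y H]) (use p2 c y0 key[OF gs] H in auto)
    qed
  qed
qed

end
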